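(* In $\mathcal{H}eis_k$, with $\tau,s',c',d'$ as in the context, the following relations hold: $(d'\otimes 1_\uparrow)\circ(1_\downarrow\otimes s)=(1_\uparrow\otimes d')\circ(\tau\otimes 1_\uparrow)$ (as morphisms $\downarrow\otimes\uparrow\otimes\uparrow\to\uparrow$), $(1_\downarrow\otimes d')\circ(s'\otimes 1_\uparrow)=(d'\otimes 1_\downarrow)\circ(1_\downarrow\otimes\tau)$ (as morphisms $\downarrow\otimes\downarrow\otimes\uparrow\to\downarrow$), $(s\otimes 1_\downarrow)\circ(1_\uparrow\otimes c')=(1_\uparrow\otimes\tau)\circ(c'\otimes 1_\uparrow)$ (as morphisms $\uparrow\to\uparrow\otimes\uparrow\otimes\downarrow$), $(1_\uparrow\otimes s')\circ(c'\otimes 1_\downarrow)=(\tau\otimes 1_\downarrow)\circ(1_\downarrow\otimes c')$ (as morphisms $\downarrow\to\uparrow\otimes\downarrow\otimes\downarrow$).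
   Context: Fix a commutative ring $\Bbbk$ and an integer $k$. In a strict monoidal category write $\mathbf 1$ for the unit object, $1_X$ for the identity, $a\circ b$ for composition, $a\otimes b$ for tensor product, $x^n$ for the $n$-fold composite. The Heisenberg category $\mathcal{H}eis_k$ is the strict $\Bbbk$-linear monoidal category generated by objects $\uparrow,\downarrow$ and morphisms $x:\uparrow\to\uparrow$, $s:\uparrow\otimes\uparrow\to\uparrow\otimes\uparrow$, $c:\mathbf 1\to\downarrow\otimes\uparrow$, $d:\uparrow\otimes\downarrow\to\mathbf 1$, subject to the following relations, where $t:=(1_\downarrow\otimes 1_\uparrow\otimes d)\circ(1_\downarrow\otimes s\otimes 1_\downarrow)\circ(c\otimes 1_\uparrow\otimes 1_\downarrow):\uparrow\otimes\downarrow\to\downarrow\otimes\uparrow$: (H) $s\circ s=1_{\uparrow\otimes\uparrow}$; $(s\otimes 1_\uparrow)\circ(1_\uparrow\otimes s)\circ(s\otimes 1_\uparrow)=(1_\uparrow\otimes s)\circ(s\otimes 1_\uparrow)\circ(1_\uparrow\otimes s)$; $(x\otimes 1_\uparrow)\circ s-s\circ(1_\uparrow\otimes x)=1_{\uparrow\otimes\uparrow}$. (A) $(d\otimes 1_\uparrow)\circ(1_\uparrow\otimes c)=1_\uparrow$ and $(1_\downarrow\otimes d)\circ(c\otimes 1_\downarrow)=1_\downarrow$. (I) If $k\ge0$, the morphism $\uparrow\otimes\downarrow\to(\downarrow\otimes\uparrow)\oplus\mathbf 1^{\oplus k}$ with components $t$ and $d\circ(x^r\otimes 1_\downarrow)$,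 $r=0,\dots,k-1$, is an isomorphism in the additive envelope; if $k<0$, the morphism $(\uparrow\otimes\downarrow)\oplus\mathbf 1^{\oplus(-k)}\to\downarrow\otimes\uparrow$ with components $t$ and $(1_\downarrow\otimes x^r)\circ c$, $r=0,\dots,-k-1$, is an isomorphism in the additive envelope (formally, the entries of a two-sided inverse matrix are adjoined as generators). If $k\ge0$ the inverse in (I) has components $\tau:\downarrow\otimes\uparrow\to\uparrow\otimes\downarrow$ and $e_r:\mathbf 1\to\uparrow\otimes\downarrow$ ($0\le r<k$); if $k<0$ it has components $\tau:\downarrow\otimes\uparrow\to\uparrow\otimes\downarrow$ and $f_r:\downarrow\otimes\uparrow\to\mathbf 1$ ($0\le r<-k$). Set $c':=-e_{k-1}$ if $k>0$, $c':=\tau\circ(1_\downarrow\otimes x^{-k})\circ c$ if $k\le0$; $d':=d\circ(x^k\otimes1_\downarrow)\circ\tau$ if $k\ge0$, $d':=f_{-k-1}$ if $k<0$. Let $s':=(1_\downarrow\otimes 1_\downarrow\otimes d)\circ(1_\downarrow\otimes t\otimes 1_\downarrow)\circ(c\otimes 1_\downarrow\otimes 1_\downarrow):\downarrow\otimes\downarrow\to\downarrow\otimes\downarrow$. *)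

theory Defs
  imports Main
begin

text \<open>
  A strict \<open>\<Bbbk>\<close>-linear monoidal category whose object monoid is the free monoid
  on the two generating objects up (encoded as True) and down (encoded as False):
  objects are words (bool lists), the unit object is the empty word and the tensor
  product of objects is concatenation.  Morphisms live in an ambient type 'm;
  Hom a b is the hom-set, which carries a \<open>\<Bbbk>\<close>-module structure
  (addition add, scalar multiplication smul, zero zer a b).
  cmp g f is the composite g o f, tns f g the tensor product f \<otimes> g.
\<close>

record ('k, 'm) lmc =
  Hom  :: "bool list \<Rightarrow> bool list \<Rightarrow> 'm set"
  cmp  :: "'m \<Rightarrow> 'm \<Rightarrow> 'm"
  tns  :: "'m \<Rightarrow> 'm \<Rightarrow> 'm"
  idm  :: "bool list \<Rightarrow> 'm"
  add  :: "'m \<Rightarrow> 'm \<Rightarrow> 'm"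
  smul :: "'k \<Rightarrow> 'm \<Rightarrow> 'm"
  zer  :: "bool list \<Rightarrow> bool list \<Rightarrow> 'm"

abbreviation UP :: "bool list" where "UP \<equiv> [True]"
abbreviation DN :: "bool list" where "DN \<equiv> [False]"

definition slmc :: "('k::comm_ring_1, 'm) lmc \<Rightarrow> bool" where
  "slmc C \<longleftrightarrow>
    \<comment> \<open>category\<close>
    (\<forall>a. idm C a \<in> Hom C a a) \<and>
    (\<forall>a b e f g. f \<in> Hom C a b \<longrightarrow> g \<in> Hom C b e \<longrightarrow> cmp C g f \<in> Hom C a e) \<and>
    (\<forall>a b f. f \<in> Hom C a b \<longrightarrow> cmp C (idm C b) f = f \<and> cmp C f (idm C a) = f) \<and>
    (\<forall>a b e w f g h. f \<in> Hom C a b \<longrightarrow> g \<in> Hom C b e \<longrightarrow> h \<in> Hom C e w \<longrightarrow>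
        cmp C h (cmp C g f) = cmp C (cmp C h g) f) \<and>
    \<comment> \<open>strict monoidal structure\<close>
    (\<forall>a b e w f g. f \<in> Hom C a b \<longrightarrow> g \<in> Hom C e w \<longrightarrow> tns C f g \<in> Hom C (a @ e) (b @ w)) \<and>
    (\<forall>a b e w u v f g h. f \<in> Hom C a b \<longrightarrow> g \<in> Hom C e w \<longrightarrow> h \<in> Hom C u v \<longrightarrow>
        tns C (tns C f g) h = tns C f (tns C g h)) \<and>
    (\<forall>a b f. f \<in> Hom C a b \<longrightarrow> tns C (idm C []) f = f \<and> tns C f (idm C []) = f) \<and>
    (\<forall>a b. idm C (a @ b) = tns C (idm C a) (idm C b)) \<and>
    (\<forall>a b e a' b' e' f g f' g'. f \<in> Hom C a b \<longrightarrow> f' \<in> Hom C b e \<longrightarrow>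
        g \<in> Hom C a' b' \<longrightarrow> g' \<in> Hom C b' e' \<longrightarrow>
        cmp C (tns C f' g') (tns C f g) = tns C (cmp C f' f) (cmp C g' g)) \<and>
    \<comment> \<open>each hom-set is a \<open>\<Bbbk>\<close>-module\<close>
    (\<forall>a b. zer C a b \<in> Hom C a b) \<and>
    (\<forall>a b f g. f \<in> Hom C a b \<longrightarrow> g \<in> Hom C a b \<longrightarrow> add C f g \<in> Hom C a b) \<and>
    (\<forall>a b r f. f \<in> Hom C a b \<longrightarrow> smul C r f \<in> Hom C a b) \<and>
    (\<forall>a b f g h. f \<in> Hom C a b \<longrightarrow> g \<in> Hom C a b \<longrightarrow> h \<in> Hom C a b \<longrightarrow>
        add C (add C f g) h = add C f (add C g h)) \<and>
    (\<forall>a b f g. f \<in> Hom C a b \<longrightarrow> g \<in> Hom C a b \<longrightarrow> add C f g = add C g f) \<and>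
    (\<forall>a b f. f \<in> Hom C a b \<longrightarrow> add C (zer C a b) f = f) \<and>
    (\<forall>a b f. f \<in> Hom C a b \<longrightarrow> (\<exists>g \<in> Hom C a b. add C f g = zer C a b)) \<and>
    (\<forall>a b f. f \<in> Hom C a b \<longrightarrow> smul C 1 f = f) \<and>
    (\<forall>a b r q f. f \<in> Hom C a b \<longrightarrow> smul C (r * q) f = smul C r (smul C q f)) \<and>
    (\<forall>a b r q f. f \<in> Hom C a b \<longrightarrow> smul C (r + q) f = add C (smul C r f) (smul C q f)) \<and>
    (\<forall>a b r f g. f \<in> Hom C a b \<longrightarrow> g \<in> Hom C a b \<longrightarrow>
        smul C r (add C f g) = add C (smul C r f) (smul C r g)) \<and>
    \<comment> \<open>composition is bilinear\<close>
    (\<forall>a b e f g g'. f \<in> Hom C a b \<longrightarrow> g \<in> Hom C b e \<longrightarrow> g' \<in> Hom C b e \<longrightarrow>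
        cmp C (add C g g') f = add C (cmp C g f) (cmp C g' f)) \<and>
    (\<forall>a b e f f' g. f \<in> Hom C a b \<longrightarrow> f' \<in> Hom C a b \<longrightarrow> g \<in> Hom C b e \<longrightarrow>
        cmp C g (add C f f') = add C (cmp C g f) (cmp C g f')) \<and>
    (\<forall>a b e r f g. f \<in> Hom C a b \<longrightarrow> g \<in> Hom C b e \<longrightarrow>
        cmp C (smul C r g) f = smul C r (cmp C g f) \<and> cmp C g (smul C r f) = smul C r (cmp C g f)) \<and>
    \<comment> \<open>tensor product is bilinear\<close>
    (\<forall>a b e w f f' g. f \<in> Hom C a b \<longrightarrow> f' \<in> Hom C a b \<longrightarrow> g \<in> Hom C e w \<longrightarrow>
        tns C (add C f f') g = add C (tns C f g) (tns C f' g)) \<and>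
    (\<forall>a b e w f g g'. f \<in> Hom C a b \<longrightarrow> g \<in> Hom C e w \<longrightarrow> g' \<in> Hom C e w \<longrightarrow>
        tns C f (add C g g') = add C (tns C f g) (tns C f g')) \<and>
    (\<forall>a b e w r f g. f \<in> Hom C a b \<longrightarrow> g \<in> Hom C e w \<longrightarrow>
        tns C (smul C r f) g = smul C r (tns C f g) \<and> tns C f (smul C r g) = smul C r (tns C f g))"

fun mpow :: "('k, 'm) lmc \<Rightarrow> bool list \<Rightarrow> 'm \<Rightarrow> nat \<Rightarrow> 'm" where
  "mpow C a f 0 = idm C a"
| "mpow C a f (Suc n) = cmp C f (mpow C a f n)"

fun hsum :: "('k, 'm) lmc \<Rightarrow> bool list \<Rightarrow> bool list \<Rightarrow> (nat \<Rightarrow> 'm) \<Rightarrow> nat \<Rightarrow> 'm" where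
  "hsum C a b g 0 = zer C a b"
| "hsum C a b g (Suc n) = add C (hsum C a b g n) (g n)"

definition heis_t :: "('k, 'm) lmc \<Rightarrow> 'm \<Rightarrow> 'm \<Rightarrow> 'm \<Rightarrow> 'm" where
  "heis_t C s c d =
     cmp C (tns C (tns C (idm C DN) (idm C UP)) d)
       (cmp C (tns C (tns C (idm C DN) s) (idm C DN))
              (tns C (tns C c (idm C UP)) (idm C DN)))"

text \<open>Relations (H), (A) and (I) of the Heisenberg category Heis_k, for generators
  x, s, c, d, together with the components of the inverse in (I):
  tau and e r (0 <= r < k) if k >= 0, tau and f r (0 <= r < -k) if k < 0.\<close>
definition heis_rels ::
  "('k::comm_ring_1, 'm) lmc \<Rightarrow> int \<Rightarrow> 'm \<Rightarrow> 'm \<Rightarrow> 'm \<Rightarrow> 'm \<Rightarrow> 'm \<Rightarrow>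
   (nat \<Rightarrow> 'm) \<Rightarrow> (nat \<Rightarrow> 'm) \<Rightarrow> bool" where
  "heis_rels C k x s c d tau e f \<longleftrightarrow>
    x \<in> Hom C UP UP \<and> s \<in> Hom C (UP @ UP) (UP @ UP) \<and>
    c \<in> Hom C [] (DN @ UP) \<and> d \<in> Hom C (UP @ DN) [] \<and>
    \<comment> \<open>(H)\<close>
    cmp C s s = idm C (UP @ UP) \<and>
    cmp C (tns C s (idm C UP)) (cmp C (tns C (idm C UP) s) (tns C s (idm C UP))) =
      cmp C (tns C (idm C UP) s) (cmp C (tns C s (idm C UP)) (tns C (idm C UP) s)) \<and>
    cmp C (tns C x (idm C UP)) s =
      add C (idm C (UP @ UP)) (cmp C s (tns C (idm C UP) x)) \<and>
    \<comment> \<open>(A)\<close>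
    cmp C (tns C d (idm C UP)) (tns C (idm C UP) c) = idm C UP \<and>
    cmp C (tns C (idm C DN) d) (tns C c (idm C DN)) = idm C DN \<and>
    \<comment> \<open>(I)\<close>
    tau \<in> Hom C (DN @ UP) (UP @ DN) \<and>
    (let t = heis_t C s c d in
     if 0 \<le> k then
       (\<forall>r < nat k. e r \<in> Hom C [] (UP @ DN)) \<and>
       add C (cmp C tau t)
         (hsum C (UP @ DN) (UP @ DN)
            (\<lambda>r. cmp C (e r) (cmp C d (tns C (mpow C UP x r) (idm C DN)))) (nat k))
         = idm C (UP @ DN) \<and>
       cmp C t tau = idm C (DN @ UP) \<and>
       (\<forall>r < nat k. cmp C t (e r) = zer C [] (DN @ UP)) \<and>
       (\<forall>r < nat k. cmp C (cmp C d (tns C (mpow C UP x r) (idm C DN))) tau = zer C (DN @ UP) []) \<and>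
       (\<forall>r < nat k. \<forall>r' < nat k.
          cmp C (cmp C d (tns C (mpow C UP x r) (idm C DN))) (e r') =
            (if r = r' then idm C [] else zer C [] []))
     else
       (\<forall>r < nat (-k). f r \<in> Hom C (DN @ UP) []) \<and>
       add C (cmp C t tau)
         (hsum C (DN @ UP) (DN @ UP)
            (\<lambda>r. cmp C (cmp C (tns C (idm C DN) (mpow C UP x r)) c) (f r)) (nat (-k)))
         = idm C (DN @ UP) \<and>
       cmp C tau t = idm C (UP @ DN) \<and>
       (\<forall>r < nat (-k). cmp C tau (cmp C (tns C (idm C DN) (mpow C UP x r)) c) = zer C [] (UP @ DN)) \<and>
       (\<forall>r < nat (-k). cmp C (f r) t = zer C (UP @ DN) []) \<and>
       (\<forall>r < nat (-k). \<forall>r' < nat (-k).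
          cmp C (f r) (cmp C (tns C (idm C DN) (mpow C UP x r')) c) =
            (if r = r' then idm C [] else zer C [] [])))"

definition heis_c' :: "('k::comm_ring_1, 'm) lmc \<Rightarrow> int \<Rightarrow> 'm \<Rightarrow> 'm \<Rightarrow> 'm \<Rightarrow> (nat \<Rightarrow> 'm) \<Rightarrow> 'm" where
  "heis_c' C k x c tau e =
     (if 0 < k then smul C (-1) (e (nat k - 1))
      else cmp C tau (cmp C (tns C (idm C DN) (mpow C UP x (nat (-k)))) c))"

definition heis_d' :: "('k, 'm) lmc \<Rightarrow> int \<Rightarrow> 'm \<Rightarrow> 'm \<Rightarrow> 'm \<Rightarrow> (nat \<Rightarrow> 'm) \<Rightarrow> 'm" where
  "heis_d' C k x d tau f =
     (if 0 \<le> k then cmp C d (cmp C (tns C (mpow C UP x (nat k)) (idm C DN)) tau)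
      else f (nat (-k) - 1))"

definition heis_s' :: "('k, 'm) lmc \<Rightarrow> 'm \<Rightarrow> 'm \<Rightarrow> 'm \<Rightarrow> 'm" where
  "heis_s' C s c d =
     cmp C (tns C (tns C (idm C DN) (idm C DN)) d)
       (cmp C (tns C (tns C (idm C DN) (heis_t C s c d)) (idm C DN))
              (tns C (tns C c (idm C DN)) (idm C DN)))"

end

theory Submission
  imports Defs
begin

abbreviation U :: bool where "U \<equiv> True"
abbreviation D :: bool where "D \<equiv> False"

type_synonym 'm ar = "bool list \<times> bool list \<times> 'm"
type_synonym 'm ly = "bool list \<times> 'm ar \<times> bool list"

definition dm :: "'m ar \<Rightarrow> bool list" where "dm F = fst F"
definition cd :: "'m ar \<Rightarrow> bool list" where "cd F = fst (snd F)"
definition mr :: "'m ar \<Rightarrow> 'm" where "mr F = snd (snd F)"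

lemma dcm_simps[simp]: "dm (a,b,f) = a" "cd (a,b,f) = b" "mr (a,b,f) = f"
  by (simp_all add: dm_def cd_def mr_def)

lemma ar_eq: "F = G \<longleftrightarrow> dm F = dm G \<and> cd F = cd G \<and> mr F = mr G"
  by (cases F; cases G; auto)

fun wh :: "bool list \<Rightarrow> bool list \<Rightarrow> 'm ly \<Rightarrow> 'm ly" where
  "wh a b (a', F, b') = (a @ a', F, b' @ b)"

fun ldm :: "'m ly \<Rightarrow> bool list" where "ldm (a,F,b) = a @ dm F @ b"
fun lcd :: "'m ly \<Rightarrow> bool list" where "lcd (a,F,b) = a @ cd F @ b"

fun ccd :: "bool list \<Rightarrow> 'm ly list \<Rightarrow> bool list" where
  "ccd p [] = p" | "ccd p (l # ls) = lcd l"

lemma ccd_app[simp]: "ccd p (xs @ ys) = ccd (ccd p ys) xs"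
  by (cases xs) auto

locale LC = fixes C :: "('k::comm_ring_1, 'm) lmc" assumes slmc: "slmc C"
begin

lemmas SL = slmc[unfolded slmc_def]
lemmas S_id = SL[THEN conjunct1]
lemmas S_cmp = SL[THEN conjunct2, THEN conjunct1]
lemmas S_idlr = SL[THEN conjunct2, THEN conjunct2, THEN conjunct1]
lemmas S_assoc = SL[THEN conjunct2, THEN conjunct2, THEN conjunct2, THEN conjunct1]
lemmas S_tns = SL[THEN conjunct2, THEN conjunct2, THEN conjunct2, THEN conjunct2, THEN conjunct1]
lemmas S_tassoc = SL[THEN conjunct2, THEN conjunct2, THEN conjunct2, THEN conjunct2, THEN conjunct2, THEN conjunct1]
lemmas S_tun = SL[THEN conjunct2, THEN conjunct2, THEN conjunct2, THEN conjunct2, THEN conjunct2, THEN conjunct2, THEN conjunct1]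
lemmas S_idapp = SL[THEN conjunct2, THEN conjunct2, THEN conjunct2, THEN conjunct2, THEN conjunct2, THEN conjunct2, THEN conjunct2, THEN conjunct1]
lemmas S_ichg = SL[THEN conjunct2, THEN conjunct2, THEN conjunct2, THEN conjunct2, THEN conjunct2, THEN conjunct2, THEN conjunct2, THEN conjunct2, THEN conjunct1]
lemmas S_zer = SL[THEN conjunct2, THEN conjunct2, THEN conjunct2, THEN conjunct2, THEN conjunct2, THEN conjunct2, THEN conjunct2, THEN conjunct2, THEN conjunct2, THEN conjunct1]
lemmas S_add = SL[THEN conjunct2, THEN conjunct2, THEN conjunct2, THEN conjunct2, THEN conjunct2, THEN conjunct2, THEN conjunct2, THEN conjunct2, THEN conjunct2, THEN conjunct2, THEN conjunct1]
lemmas S_smul = SL[THEN conjunct2, THEN conjunct2, THEN conjunct2, THEN conjunct2, THEN conjunct2, THEN conjunct2, THEN conjunct2, THEN conjunct2, THEN conjunct2, THEN conjunct2, THEN conjunct2, THEN conjunct1]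
lemmas S_addassoc = SL[THEN conjunct2, THEN conjunct2, THEN conjunct2, THEN conjunct2, THEN conjunct2, THEN conjunct2, THEN conjunct2, THEN conjunct2, THEN conjunct2, THEN conjunct2, THEN conjunct2, THEN conjunct2, THEN conjunct1]
lemmas S_addcomm = SL[THEN conjunct2, THEN conjunct2, THEN conjunct2, THEN conjunct2, THEN conjunct2, THEN conjunct2, THEN conjunct2, THEN conjunct2, THEN conjunct2, THEN conjunct2, THEN conjunct2, THEN conjunct2, THEN conjunct2, THEN conjunct1]
lemmas S_zadd = SL[THEN conjunct2, THEN conjunct2, THEN conjunct2, THEN conjunct2, THEN conjunct2, THEN conjunct2, THEN conjunct2, THEN conjunct2, THEN conjunct2, THEN conjunct2, THEN conjunct2, THEN conjunct2, THEN conjunct2, THEN conjunct2, THEN conjunct1]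
lemmas S_neg = SL[THEN conjunct2, THEN conjunct2, THEN conjunct2, THEN conjunct2, THEN conjunct2, THEN conjunct2, THEN conjunct2, THEN conjunct2, THEN conjunct2, THEN conjunct2, THEN conjunct2, THEN conjunct2, THEN conjunct2, THEN conjunct2, THEN conjunct2, THEN conjunct1]
lemmas S_smul1 = SL[THEN conjunct2, THEN conjunct2, THEN conjunct2, THEN conjunct2, THEN conjunct2, THEN conjunct2, THEN conjunct2, THEN conjunct2, THEN conjunct2, THEN conjunct2, THEN conjunct2, THEN conjunct2, THEN conjunct2, THEN conjunct2, THEN conjunct2, THEN conjunct2, THEN conjunct1]
lemmas S_smulmult = SL[THEN conjunct2, THEN conjunct2, THEN conjunct2, THEN conjunct2, THEN conjunct2, THEN conjunct2, THEN conjunct2, THEN conjunct2, THEN conjunct2, THEN conjunct2, THEN conjunct2, THEN conjunct2, THEN conjunct2, THEN conjunct2, THEN conjunct2, THEN conjunct2, THEN conjunct2, THEN conjunct1]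
lemmas S_smuladd = SL[THEN conjunct2, THEN conjunct2, THEN conjunct2, THEN conjunct2, THEN conjunct2, THEN conjunct2, THEN conjunct2, THEN conjunct2, THEN conjunct2, THEN conjunct2, THEN conjunct2, THEN conjunct2, THEN conjunct2, THEN conjunct2, THEN conjunct2, THEN conjunct2, THEN conjunct2, THEN conjunct2, THEN conjunct1]
lemmas S_smuldist = SL[THEN conjunct2, THEN conjunct2, THEN conjunct2, THEN conjunct2, THEN conjunct2, THEN conjunct2, THEN conjunct2, THEN conjunct2, THEN conjunct2, THEN conjunct2, THEN conjunct2, THEN conjunct2, THEN conjunct2, THEN conjunct2, THEN conjunct2, THEN conjunct2, THEN conjunct2, THEN conjunct2, THEN conjunct2, THEN conjunct1]
lemmas S_cmpaddl = SL[THEN conjunct2, THEN conjunct2, THEN conjunct2, THEN conjunct2, THEN conjunct2, THEN conjunct2, THEN conjunct2, THEN conjunct2, THEN conjunct2, THEN conjunct2, THEN conjunct2, THEN conjunct2, THEN conjunct2, THEN conjunct2, THEN conjunct2, THEN conjunct2, THEN conjunct2, THEN conjunct2, THEN conjunct2, THEN conjunct2, THEN conjunct1]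
lemmas S_cmpaddr = SL[THEN conjunct2, THEN conjunct2, THEN conjunct2, THEN conjunct2, THEN conjunct2, THEN conjunct2, THEN conjunct2, THEN conjunct2, THEN conjunct2, THEN conjunct2, THEN conjunct2, THEN conjunct2, THEN conjunct2, THEN conjunct2, THEN conjunct2, THEN conjunct2, THEN conjunct2, THEN conjunct2, THEN conjunct2, THEN conjunct2, THEN conjunct2, THEN conjunct1]
lemmas S_cmpsmul = SL[THEN conjunct2, THEN conjunct2, THEN conjunct2, THEN conjunct2, THEN conjunct2, THEN conjunct2, THEN conjunct2, THEN conjunct2, THEN conjunct2, THEN conjunct2, THEN conjunct2, THEN conjunct2, THEN conjunct2, THEN conjunct2, THEN conjunct2, THEN conjunct2, THEN conjunct2, THEN conjunct2, THEN conjunct2, THEN conjunct2, THEN conjunct2, THEN conjunct2, THEN conjunct1]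
lemmas S_tnsaddl = SL[THEN conjunct2, THEN conjunct2, THEN conjunct2, THEN conjunct2, THEN conjunct2, THEN conjunct2, THEN conjunct2, THEN conjunct2, THEN conjunct2, THEN conjunct2, THEN conjunct2, THEN conjunct2, THEN conjunct2, THEN conjunct2, THEN conjunct2, THEN conjunct2, THEN conjunct2, THEN conjunct2, THEN conjunct2, THEN conjunct2, THEN conjunct2, THEN conjunct2, THEN conjunct2, THEN conjunct1]
lemmas S_tnsaddr = SL[THEN conjunct2, THEN conjunct2, THEN conjunct2, THEN conjunct2, THEN conjunct2, THEN conjunct2, THEN conjunct2, THEN conjunct2, THEN conjunct2, THEN conjunct2, THEN conjunct2, THEN conjunct2, THEN conjunct2, THEN conjunct2, THEN conjunct2, THEN conjunct2, THEN conjunct2, THEN conjunct2, THEN conjunct2, THEN conjunct2, THEN conjunct2, THEN conjunct2, THEN conjunct2, THEN conjunct2, THEN conjunct1]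
lemmas S_tnssmul = SL[THEN conjunct2, THEN conjunct2, THEN conjunct2, THEN conjunct2, THEN conjunct2, THEN conjunct2, THEN conjunct2, THEN conjunct2, THEN conjunct2, THEN conjunct2, THEN conjunct2, THEN conjunct2, THEN conjunct2, THEN conjunct2, THEN conjunct2, THEN conjunct2, THEN conjunct2, THEN conjunct2, THEN conjunct2, THEN conjunct2, THEN conjunct2, THEN conjunct2, THEN conjunct2, THEN conjunct2, THEN conjunct2]

lemma ax_id: "idm C a \<in> Hom C a a" using S_id by blast
lemma ax_cmp: "f \<in> Hom C a b \<Longrightarrow> g \<in> Hom C b e \<Longrightarrow> cmp C g f \<in> Hom C a e"
  using S_cmp by blast
lemma ax_idl: "f \<in> Hom C a b \<Longrightarrow> cmp C (idm C b) f = f"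
  using S_idlr by blast
lemma ax_idr: "f \<in> Hom C a b \<Longrightarrow> cmp C f (idm C a) = f"
  using S_idlr by blast
lemma ax_assoc: "f \<in> Hom C a b \<Longrightarrow> g \<in> Hom C b e \<Longrightarrow> h \<in> Hom C e w \<Longrightarrow>
        cmp C h (cmp C g f) = cmp C (cmp C h g) f"
  using S_assoc by blast
lemma ax_tns: "f \<in> Hom C a b \<Longrightarrow> g \<in> Hom C e w \<Longrightarrow> tns C f g \<in> Hom C (a @ e) (b @ w)"
  using S_tns by blast
lemma ax_tassoc: "f \<in> Hom C a b \<Longrightarrow> g \<in> Hom C e w \<Longrightarrow> h \<in> Hom C u v \<Longrightarrow>
        tns C (tns C f g) h = tns C f (tns C g h)"
  using S_tassoc by blast
lemma ax_tunl: "f \<in> Hom C a b \<Longrightarrow> tns C (idm C []) f = f"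
  using S_tun by blast
lemma ax_tunr: "f \<in> Hom C a b \<Longrightarrow> tns C f (idm C []) = f"
  using S_tun by blast
lemma ax_idapp: "idm C (a @ b) = tns C (idm C a) (idm C b)"
  using S_idapp by blast
lemma ax_ichg: "f \<in> Hom C a b \<Longrightarrow> f' \<in> Hom C b e \<Longrightarrow>
        g \<in> Hom C a' b' \<Longrightarrow> g' \<in> Hom C b' e' \<Longrightarrow>
        cmp C (tns C f' g') (tns C f g) = tns C (cmp C f' f) (cmp C g' g)"
  using S_ichg by blast
lemma ax_zer: "zer C a b \<in> Hom C a b"
  using S_zer by blast
lemma ax_add: "f \<in> Hom C a b \<Longrightarrow> g \<in> Hom C a b \<Longrightarrow> add C f g \<in> Hom C a b"
  using S_add by blast
lemma ax_smul: "f \<in> Hom C a b \<Longrightarrow> smul C r f \<in> Hom C a b"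
  using S_smul by blast
lemma ax_addassoc: "f \<in> Hom C a b \<Longrightarrow> g \<in> Hom C a b \<Longrightarrow> h \<in> Hom C a b \<Longrightarrow>
        add C (add C f g) h = add C f (add C g h)"
  using S_addassoc by blast
lemma ax_addcomm: "f \<in> Hom C a b \<Longrightarrow> g \<in> Hom C a b \<Longrightarrow> add C f g = add C g f"
  using S_addcomm by blast
lemma ax_zadd: "f \<in> Hom C a b \<Longrightarrow> add C (zer C a b) f = f"
  using S_zadd by blast
lemma ax_neg: "f \<in> Hom C a b \<Longrightarrow> (\<exists>g \<in> Hom C a b. add C f g = zer C a b)"
  using S_neg by blast
lemma ax_smul1: "f \<in> Hom C a b \<Longrightarrow> smul C 1 f = f"
  using S_smul1 by blast
lemma ax_smulmult: "f \<in> Hom C a b \<Longrightarrow> smul C (r * q) f = smul C r (smul C q f)"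
  using S_smulmult by blast
lemma ax_smuladd: "f \<in> Hom C a b \<Longrightarrow> smul C (r + q) f = add C (smul C r f) (smul C q f)"
  using S_smuladd by blast
lemma ax_smuldist: "f \<in> Hom C a b \<Longrightarrow> g \<in> Hom C a b \<Longrightarrow>
        smul C r (add C f g) = add C (smul C r f) (smul C r g)"
  using S_smuldist by blast
lemma ax_cmpaddl: "f \<in> Hom C a b \<Longrightarrow> g \<in> Hom C b e \<Longrightarrow> g' \<in> Hom C b e \<Longrightarrow>
        cmp C (add C g g') f = add C (cmp C g f) (cmp C g' f)"
  using S_cmpaddl by blast
lemma ax_cmpaddr: "f \<in> Hom C a b \<Longrightarrow> f' \<in> Hom C a b \<Longrightarrow> g \<in> Hom C b e \<Longrightarrow>
        cmp C g (add C f f') = add C (cmp C g f) (cmp C g f')"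
  using S_cmpaddr by blast
lemma ax_cmpsmull: "f \<in> Hom C a b \<Longrightarrow> g \<in> Hom C b e \<Longrightarrow>
        cmp C (smul C r g) f = smul C r (cmp C g f)"
  using S_cmpsmul by blast
lemma ax_cmpsmulr: "f \<in> Hom C a b \<Longrightarrow> g \<in> Hom C b e \<Longrightarrow>
        cmp C g (smul C r f) = smul C r (cmp C g f)"
  using S_cmpsmul by blast
lemma ax_tnsaddl: "f \<in> Hom C a b \<Longrightarrow> f' \<in> Hom C a b \<Longrightarrow> g \<in> Hom C e w \<Longrightarrow>
        tns C (add C f f') g = add C (tns C f g) (tns C f' g)"
  using S_tnsaddl by blast
lemma ax_tnsaddr: "f \<in> Hom C a b \<Longrightarrow> g \<in> Hom C e w \<Longrightarrow> g' \<in> Hom C e w \<Longrightarrow>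
        tns C f (add C g g') = add C (tns C f g) (tns C f g')"
  using S_tnsaddr by blast
lemma ax_tnssmull: "f \<in> Hom C a b \<Longrightarrow> g \<in> Hom C e w \<Longrightarrow>
        tns C (smul C r f) g = smul C r (tns C f g)"
  using S_tnssmul by blast
lemma ax_tnssmulr: "f \<in> Hom C a b \<Longrightarrow> g \<in> Hom C e w \<Longrightarrow>
        tns C f (smul C r g) = smul C r (tns C f g)"
  using S_tnssmul by blast

lemma addz: "f \<in> Hom C a b \<Longrightarrow> add C f (zer C a b) = f"
  using ax_zadd[of f a b] ax_addcomm[of f a b "zer C a b"] ax_zer[of a b] by simp

lemma add_cancel: assumes "f \<in> Hom C a b" "g \<in> Hom C a b" "h \<in> Hom C a b"
  and "add C h f = add C h g" shows "f = g"
proof -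
  obtain n where n: "n \<in> Hom C a b" "add C h n = zer C a b" using ax_neg[OF assms(3)] by blast
  have nh: "add C n h = zer C a b" using n ax_addcomm[OF n(1) assms(3)] by simp
  have "f = add C (add C n h) f" using ax_zadd[OF assms(1)] nh by simp
  also have "\<dots> = add C n (add C h f)" using ax_addassoc[OF n(1) assms(3) assms(1)] .
  also have "\<dots> = add C n (add C h g)" using assms by simp
  also have "\<dots> = add C (add C n h) g" using ax_addassoc[OF n(1) assms(3) assms(2)] by simp
  also have "\<dots> = g" using nh ax_zadd[OF assms(2)] by simp
  finally show ?thesis .
qed

lemma smul0: assumes "f \<in> Hom C a b" shows "smul C 0 f = zer C a b"
proof -
  have s: "smul C 0 f \<in> Hom C a b" using ax_smul[OF assms] .
  have "add C (smul C 0 f) (smul C 0 f) = smul C (0+0) f" using ax_smuladd[OF assms, of 0 0] by simp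
  also have "\<dots> = add C (smul C 0 f) (zer C a b)" using addz[OF s] by simp
  finally show ?thesis using add_cancel[OF s ax_zer s] by simp
qed

lemma cmp_zl: assumes "f \<in> Hom C a b" shows "cmp C (zer C b e) f = zer C a e"
proof -
  have "cmp C (zer C b e) f = cmp C (smul C 0 (zer C b e)) f" using smul0[OF ax_zer] by simp
  also have "\<dots> = smul C 0 (cmp C (zer C b e) f)" using ax_cmpsmull[OF assms ax_zer] .
  also have "\<dots> = zer C a e" using smul0[OF ax_cmp[OF assms ax_zer]] .
  finally show ?thesis .
qed
lemma cmp_zr: assumes "g \<in> Hom C b e" shows "cmp C g (zer C a b) = zer C a e"
proof -
  have "cmp C g (zer C a b) = cmp C g (smul C 0 (zer C a b))" using smul0[OF ax_zer] by simp
  also have "\<dots> = smul C 0 (cmp C g (zer C a b))" using ax_cmpsmulr[OF ax_zer assms] .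
  also have "\<dots> = zer C a e" using smul0[OF ax_cmp[OF ax_zer assms]] .
  finally show ?thesis .
qed
lemma tns_zl: assumes "g \<in> Hom C e w" shows "tns C (zer C a b) g = zer C (a@e) (b@w)"
proof -
  have "tns C (zer C a b) g = tns C (smul C 0 (zer C a b)) g" using smul0[OF ax_zer] by simp
  also have "\<dots> = smul C 0 (tns C (zer C a b) g)" using ax_tnssmull[OF ax_zer assms] .
  also have "\<dots> = zer C (a@e) (b@w)" using smul0[OF ax_tns[OF ax_zer assms]] .
  finally show ?thesis .
qed
lemma tns_zr: assumes "f \<in> Hom C a b" shows "tns C f (zer C e w) = zer C (a@e) (b@w)"
proof -
  have "tns C f (zer C e w) = tns C f (smul C 0 (zer C e w))" using smul0[OF ax_zer] by simp
  also have "\<dots> = smul C 0 (tns C f (zer C e w))" using ax_tnssmulr[OF assms ax_zer] .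
  also have "\<dots> = zer C (a@e) (b@w)" using smul0[OF ax_tns[OF assms ax_zer]] .
  finally show ?thesis .
qed
lemma smul_z: "smul C r (zer C a b) = zer C a b"
proof -
  have "smul C (r*0) (zer C a b) = smul C r (smul C 0 (zer C a b))" by (rule ax_smulmult[OF ax_zer])
  thus ?thesis using smul0[OF ax_zer, of a b] by simp
qed

definition valid :: "'m ar \<Rightarrow> bool" where "valid F \<longleftrightarrow> mr F \<in> Hom C (dm F) (cd F)"
definition Ii :: "bool list \<Rightarrow> 'm ar" where "Ii a = (a, a, idm C a)"
definition cp :: "'m ar \<Rightarrow> 'm ar \<Rightarrow> 'm ar" (infixr "\<odot>" 55)
  where "G \<odot> F = (dm F, cd G, cmp C (mr G) (mr F))"
definition tn :: "'m ar \<Rightarrow> 'm ar \<Rightarrow> 'm ar" (infixr "\<otimes>" 60)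
  where "F \<otimes> G = (dm F @ dm G, cd F @ cd G, tns C (mr F) (mr G))"
definition pl :: "'m ar \<Rightarrow> 'm ar \<Rightarrow> 'm ar" (infixl "\<oplus>" 52)
  where "F \<oplus> G = (dm F, cd F, add C (mr F) (mr G))"
definition sm :: "'k \<Rightarrow> 'm ar \<Rightarrow> 'm ar"
  where "sm r F = (dm F, cd F, smul C r (mr F))"
definition Z :: "bool list \<Rightarrow> bool list \<Rightarrow> 'm ar" where "Z a b = (a, b, zer C a b)"

lemma dc_simps[simp]:
  "dm (Ii a) = a" "cd (Ii a) = a" "dm (G \<odot> F) = dm F" "cd (G \<odot> F) = cd G"
  "dm (F \<otimes> G) = dm F @ dm G" "cd (F \<otimes> G) = cd F @ cd G"
  "dm (F \<oplus> G) = dm F" "cd (F \<oplus> G) = cd F" "dm (sm r F) = dm F" "cd (sm r F) = cd F"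
  "dm (Z a b) = a" "cd (Z a b) = b"
  by (simp_all add: Ii_def cp_def tn_def pl_def sm_def Z_def)

lemma mr_simps: "mr (Ii a) = idm C a" "mr (G \<odot> F) = cmp C (mr G) (mr F)"
  "mr (F \<otimes> G) = tns C (mr F) (mr G)" "mr (F \<oplus> G) = add C (mr F) (mr G)"
  "mr (sm r F) = smul C r (mr F)" "mr (Z a b) = zer C a b"
  by (simp_all add: Ii_def cp_def tn_def pl_def sm_def Z_def)

lemma valid_Id[simp]: "valid (Ii a)" by (simp add: valid_def mr_simps ax_id)
lemma valid_Z[simp]: "valid (Z a b)" by (simp add: valid_def mr_simps ax_zer)
lemma valid_cp[simp]: "valid F \<Longrightarrow> valid G \<Longrightarrow> dm G = cd F \<Longrightarrow> valid (G \<odot> F)"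
  by (simp add: valid_def mr_simps ax_cmp)
lemma valid_tn[simp]: "valid F \<Longrightarrow> valid G \<Longrightarrow> valid (F \<otimes> G)"
  by (simp add: valid_def mr_simps ax_tns)
lemma valid_pl[simp]: "valid F \<Longrightarrow> valid G \<Longrightarrow> dm G = dm F \<Longrightarrow> cd G = cd F \<Longrightarrow> valid (F \<oplus> G)"
  by (simp add: valid_def mr_simps ax_add)
lemma valid_sm[simp]: "valid F \<Longrightarrow> valid (sm r F)"
  by (simp add: valid_def mr_simps ax_smul)

lemma cp_assoc: "valid F \<Longrightarrow> valid G \<Longrightarrow> valid H \<Longrightarrow> dm G = cd F \<Longrightarrow> dm H = cd G \<Longrightarrow>
   (H \<odot> G) \<odot> F = H \<odot> (G \<odot> F)"
  by (simp add: ar_eq mr_simps valid_def ax_assoc)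
lemma Id_cp: "valid F \<Longrightarrow> b = cd F \<Longrightarrow> Ii b \<odot> F = F"
  by (simp add: ar_eq mr_simps valid_def ax_idl)
lemma cp_Id: "valid F \<Longrightarrow> a = dm F \<Longrightarrow> F \<odot> Ii a = F"
  by (simp add: ar_eq mr_simps valid_def ax_idr)
lemma tn_assoc: "valid F \<Longrightarrow> valid G \<Longrightarrow> valid H \<Longrightarrow> (F \<otimes> G) \<otimes> H = F \<otimes> (G \<otimes> H)"
  by (simp add: ar_eq mr_simps valid_def ax_tassoc)
lemma Id_tn: "valid F \<Longrightarrow> Ii [] \<otimes> F = F"
  by (simp add: ar_eq mr_simps valid_def ax_tunl)
lemma tn_Id: "valid F \<Longrightarrow> F \<otimes> Ii [] = F"
  by (simp add: ar_eq mr_simps valid_def ax_tunr)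
lemma Id_app: "Ii a \<otimes> Ii b = Ii (a @ b)"
  by (simp add: ar_eq mr_simps ax_idapp)
lemma ichg: "valid F \<Longrightarrow> valid F' \<Longrightarrow> valid G \<Longrightarrow> valid G' \<Longrightarrow> dm F' = cd F \<Longrightarrow> dm G' = cd G \<Longrightarrow>
   (F' \<otimes> G') \<odot> (F \<otimes> G) = (F' \<odot> F) \<otimes> (G' \<odot> G)"
  by (simp add: ar_eq mr_simps valid_def) (metis ax_ichg)

lemma pl_cp: "valid F \<Longrightarrow> valid G \<Longrightarrow> valid G' \<Longrightarrow> dm G = cd F \<Longrightarrow> dm G' = cd F \<Longrightarrow> cd G' = cd G \<Longrightarrow>
   (G \<oplus> G') \<odot> F = (G \<odot> F) \<oplus> (G' \<odot> F)"
  by (simp add: ar_eq mr_simps valid_def) (metis ax_cmpaddl)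
lemma cp_pl: "valid F \<Longrightarrow> valid F' \<Longrightarrow> valid G \<Longrightarrow> dm G = cd F \<Longrightarrow> dm F' = dm F \<Longrightarrow> cd F' = cd F \<Longrightarrow>
   G \<odot> (F \<oplus> F') = (G \<odot> F) \<oplus> (G \<odot> F')"
  by (simp add: ar_eq mr_simps valid_def) (metis ax_cmpaddr)
lemma pl_tn: "valid F \<Longrightarrow> valid F' \<Longrightarrow> valid G \<Longrightarrow> dm F' = dm F \<Longrightarrow> cd F' = cd F \<Longrightarrow>
   (F \<oplus> F') \<otimes> G = (F \<otimes> G) \<oplus> (F' \<otimes> G)"
  by (simp add: ar_eq mr_simps valid_def) (metis ax_tnsaddl)
lemma tn_pl: "valid F \<Longrightarrow> valid G \<Longrightarrow> valid G' \<Longrightarrow> dm G' = dm G \<Longrightarrow> cd G' = cd G \<Longrightarrow>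
   F \<otimes> (G \<oplus> G') = (F \<otimes> G) \<oplus> (F \<otimes> G')"
  by (simp add: ar_eq mr_simps valid_def) (metis ax_tnsaddr)
lemma sm_cp: "valid F \<Longrightarrow> valid G \<Longrightarrow> dm G = cd F \<Longrightarrow> (sm r G) \<odot> F = sm r (G \<odot> F)"
  by (simp add: ar_eq mr_simps valid_def) (metis ax_cmpsmull)
lemma cp_sm: "valid F \<Longrightarrow> valid G \<Longrightarrow> dm G = cd F \<Longrightarrow> G \<odot> (sm r F) = sm r (G \<odot> F)"
  by (simp add: ar_eq mr_simps valid_def) (metis ax_cmpsmulr)
lemma sm_tn: "valid F \<Longrightarrow> valid G \<Longrightarrow> (sm r F) \<otimes> G = sm r (F \<otimes> G)"
  by (simp add: ar_eq mr_simps valid_def) (metis ax_tnssmull)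
lemma tn_sm: "valid F \<Longrightarrow> valid G \<Longrightarrow> F \<otimes> (sm r G) = sm r (F \<otimes> G)"
  by (simp add: ar_eq mr_simps valid_def) (metis ax_tnssmulr)
lemma Z_cp: "valid F \<Longrightarrow> b = cd F \<Longrightarrow> Z b e \<odot> F = Z (dm F) e"
  by (simp add: ar_eq mr_simps valid_def cmp_zl)
lemma cp_Z: "valid G \<Longrightarrow> b = dm G \<Longrightarrow> G \<odot> Z a b = Z a (cd G)"
  by (simp add: ar_eq mr_simps valid_def cmp_zr)
lemma Z_tn: "valid G \<Longrightarrow> Z a b \<otimes> G = Z (a @ dm G) (b @ cd G)"
  by (simp add: ar_eq mr_simps valid_def tns_zl)
lemma tn_Z: "valid F \<Longrightarrow> F \<otimes> Z a b = Z (dm F @ a) (cd F @ b)"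
  by (simp add: ar_eq mr_simps valid_def tns_zr)
lemma pl_Z: "valid F \<Longrightarrow> a = dm F \<Longrightarrow> b = cd F \<Longrightarrow> F \<oplus> Z a b = F"
  by (simp add: ar_eq mr_simps valid_def addz)
lemma Z_pl: "valid F \<Longrightarrow> a = dm F \<Longrightarrow> b = cd F \<Longrightarrow> Z a b \<oplus> F = F"
  by (simp add: ar_eq mr_simps valid_def ax_zadd)
lemma sm_Z: "sm r (Z a b) = Z a b"
  by (simp add: ar_eq mr_simps smul_z)
lemma pl_comm: "valid F \<Longrightarrow> valid G \<Longrightarrow> dm G = dm F \<Longrightarrow> cd G = cd F \<Longrightarrow> F \<oplus> G = G \<oplus> F"
  by (simp add: ar_eq mr_simps valid_def) (metis ax_addcomm)
lemma pl_assoc: "valid F \<Longrightarrow> valid G \<Longrightarrow> valid H \<Longrightarrow> dm G = dm F \<Longrightarrow> cd G = cd F \<Longrightarrow>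
  dm H = dm F \<Longrightarrow> cd H = cd F \<Longrightarrow> (F \<oplus> G) \<oplus> H = F \<oplus> (G \<oplus> H)"
  by (simp add: ar_eq mr_simps valid_def) (metis ax_addassoc)
lemma sm_sm: "valid F \<Longrightarrow> sm r (sm q F) = sm (r*q) F"
  by (simp add: ar_eq mr_simps valid_def) (metis ax_smulmult)
lemma sm_1: "valid F \<Longrightarrow> sm 1 F = F"
  by (simp add: ar_eq mr_simps valid_def) (metis ax_smul1)

fun lay :: "'m ly \<Rightarrow> 'm ar" where "lay (a,F,b) = (Ii a \<otimes> F) \<otimes> Ii b"
fun lva :: "'m ly \<Rightarrow> bool" where "lva (a,F,b) = valid F"
declare lay.simps[simp del]

fun chn :: "bool list \<Rightarrow> 'm ly list \<Rightarrow> 'm ar" where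
  "chn p [] = Ii p" | "chn p (l # ls) = lay l \<odot> chn p ls"

fun vc :: "bool list \<Rightarrow> 'm ly list \<Rightarrow> bool" where
  "vc p [] = True" | "vc p (l # ls) = (lva l \<and> ldm l = ccd p ls \<and> vc p ls)"

lemma lay_dc[simp]: "dm (lay l) = ldm l" "cd (lay l) = lcd l"
  by (cases l; simp add: lay.simps)+
lemma lay_valid[simp]: "lva l \<Longrightarrow> valid (lay l)"
  by (cases l; simp add: lay.simps)

lemma chn_dc[simp]: "dm (chn p ls) = p" "cd (chn p ls) = ccd p ls"
  by (induct ls) auto

lemma chn_valid[simp]: "vc p ls \<Longrightarrow> valid (chn p ls)"
  by (induct ls) auto

lemma vc_app[simp]: "vc p (xs @ ys) = (vc (ccd p ys) xs \<and> vc p ys)"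
  by (induct xs) auto

lemma chn_app: "vc p (xs @ ys) \<Longrightarrow> chn p (xs @ ys) = chn (ccd p ys) xs \<odot> chn p ys"
proof (induct xs)
  case Nil thus ?case by (simp add: Id_cp)
next
  case (Cons l xs)
  thus ?case by (simp add: cp_assoc)
qed

lemma lay_cp: "valid F \<Longrightarrow> valid G \<Longrightarrow> dm G = cd F \<Longrightarrow>
  lay (a, G \<odot> F, b) = lay (a, G, b) \<odot> lay (a, F, b)"
  by (simp add: ichg Id_cp lay.simps)

lemma lay_lay: "valid F \<Longrightarrow> lay (a, lay (a', F, b'), b) = lay (a @ a', F, b' @ b)"
  by (simp add: tn_assoc Id_app[symmetric] lay.simps)

lemma lay_Id: "lay (a, Ii q, b) = Ii (a @ q @ b)"
  by (simp add: Id_app lay.simps)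

lemma chn_wh: "vc q ys \<Longrightarrow> chn (a @ q @ b) (map (wh a b) ys) = lay (a, chn q ys, b)"
proof (induct ys)
  case Nil thus ?case by (simp add: lay_Id)
next
  case (Cons l ys)
  obtain a' F b' where l: "l = (a', F, b')" by (cases l)
  have "lay (a, chn q (l # ys), b) = lay (a, lay l, b) \<odot> lay (a, chn q ys, b)"
    using Cons by (simp add: lay_cp)
  also have "lay (a, lay l, b) = lay (wh a b l)" using Cons l by (simp add: lay_lay)
  finally show ?case using Cons by simp
qed

lemma vc_wh[simp]: "vc (a @ q @ b) (map (wh a b) ys) = vc q ys"
proof (induct ys)
  case Nil thus ?case by simp
next
  case (Cons l ys) thus ?case by (cases l; cases ys) auto
qed

lemma ccd_wh[simp]: "ccd (a @ q @ b) (map (wh a b) ys) = a @ ccd q ys @ b"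
  by (cases ys) auto


lemma chn_rep: assumes "vc p (xs @ ys @ zs)" "vc (ccd p zs) ys'"
  "chn (ccd p zs) ys = chn (ccd p zs) ys'"
  shows "chn p (xs @ ys @ zs) = chn p (xs @ ys' @ zs)"
proof -
  let ?q = "ccd p zs"
  have cc: "ccd ?q ys = ccd ?q ys'" using arg_cong[OF assms(3), of cd] by simp
  have v2: "vc p (xs @ ys' @ zs)" using assms cc by simp
  have "chn p (xs @ ys @ zs) = chn (ccd p (ys @ zs)) xs \<odot> chn p (ys @ zs)"
    using assms(1) by (metis append_assoc chn_app)
  also have "chn p (ys @ zs) = chn ?q ys \<odot> chn p zs" using assms(1) chn_app by simp
  also have "\<dots> = chn ?q ys' \<odot> chn p zs" using assms(3) by simp
  also have "\<dots> = chn p (ys' @ zs)" using v2 chn_app by simp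
  also have "ccd p (ys @ zs) = ccd p (ys' @ zs)" using cc by simp
  also have "chn (ccd p (ys' @ zs)) xs \<odot> chn p (ys' @ zs) = chn p (xs @ ys' @ zs)"
    using v2 by (metis append_assoc chn_app)
  finally show ?thesis .
qed

lemma ls_split: "i + n \<le> length ls \<Longrightarrow> ls = take i ls @ take n (drop i ls) @ drop (i + n) ls"
  by (metis append_take_drop_id drop_drop add.commute)

lemma rep_at: assumes "chn q ys = chn q ys'" "vc q ys" "vc q ys'" "vc p ls"
  "take (length ys) (drop i ls) = map (wh a b) ys" "i + length ys \<le> length ls"
  "ccd p (drop (i + length ys) ls) = a @ q @ b"
  "chn p (take i ls @ map (wh a b) ys' @ drop (i + length ys) ls) = X"
  shows "chn p ls = X"
proof -
  have e: "ls = take i ls @ map (wh a b) ys @ drop (i + length ys) ls"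
    using ls_split[OF assms(6)] assms(5) by simp
  have "chn p ls = chn p (take i ls @ map (wh a b) ys' @ drop (i + length ys) ls)"
    apply (subst e)
    apply (rule chn_rep)
    using assms e apply (metis)
    using assms apply simp
    using assms by (simp add: chn_wh)
  thus ?thesis using assms(8) by simp
qed

lemma swapL2: "valid F \<Longrightarrow> valid G \<Longrightarrow>
  lay (a1, F, m @ cd G @ b2) \<odot> lay (a1 @ dm F @ m, G, b2) =
  lay (a1 @ cd F @ m, G, b2) \<odot> lay (a1, F, m @ dm G @ b2)"
  by (simp add: lay.simps tn_assoc Id_app[symmetric] ichg Id_cp cp_Id)

definition swL :: "nat \<Rightarrow> 'm ly list \<Rightarrow> 'm ly list" where
 "swL i ls = (case ls ! i of (a1, F, b1) \<Rightarrow> case ls ! Suc i of (a2, G, b2) \<Rightarrow>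
   let m = drop (length a1 + length (dm F)) a2 in
   take i ls @ [(a1 @ cd F @ m, G, b2), (a1, F, m @ dm G @ b2)] @ drop (Suc (Suc i)) ls)"
definition swLc :: "nat \<Rightarrow> 'm ly list \<Rightarrow> bool" where
 "swLc i ls = (case ls ! i of (a1, F, b1) \<Rightarrow> case ls ! Suc i of (a2, G, b2) \<Rightarrow>
   let m = drop (length a1 + length (dm F)) a2 in
   a2 = a1 @ dm F @ m \<and> b1 = m @ cd G @ b2)"
definition swR :: "nat \<Rightarrow> 'm ly list \<Rightarrow> 'm ly list" where
 "swR i ls = (case ls ! i of (a1, F, b1) \<Rightarrow> case ls ! Suc i of (a2, G, b2) \<Rightarrow>
   let m = drop (length a2 + length (cd G)) a1 in
   take i ls @ [(a2, G, m @ cd F @ b1), (a2 @ dm G @ m, F, b1)] @ drop (Suc (Suc i)) ls)"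
definition swRc :: "nat \<Rightarrow> 'm ly list \<Rightarrow> bool" where
 "swRc i ls = (case ls ! i of (a1, F, b1) \<Rightarrow> case ls ! Suc i of (a2, G, b2) \<Rightarrow>
   let m = drop (length a2 + length (cd G)) a1 in
   a1 = a2 @ cd G @ m \<and> b2 = m @ dm F @ b1)"

lemma two_split: "Suc i < length ls \<Longrightarrow> ls = take i ls @ [ls ! i, ls ! Suc i] @ drop (Suc (Suc i)) ls"
  by (metis Cons_nth_drop_Suc Suc_lessD append_Cons append_Nil append_take_drop_id)

lemma swL_ok: assumes "vc p ls" "Suc i < length ls" "swLc i ls" "chn p (swL i ls) = X"
  shows "chn p ls = X"
proof -
  obtain a1 F b1 where l1: "ls ! i = (a1, F, b1)" by (cases "ls ! i")
  obtain a2 G b2 where l2: "ls ! Suc i = (a2, G, b2)" by (cases "ls ! Suc i")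
  define m where "m = drop (length a1 + length (dm F)) a2"
  have c: "a2 = a1 @ dm F @ m" "b1 = m @ cd G @ b2" using assms(3) l1 l2 m_def by (simp_all add: swLc_def Let_def)
  have e: "ls = take i ls @ [ls ! i, ls ! Suc i] @ drop (Suc (Suc i)) ls" using two_split assms(2) .
  have v: "vc p (take i ls @ [ls ! i, ls ! Suc i] @ drop (Suc (Suc i)) ls)" using e assms(1) by simp
  hence vF: "valid F" "valid G" and q: "ccd p (drop (Suc (Suc i)) ls) = a2 @ dm G @ b2"
    using l1 l2 by auto
  have "chn p ls = chn p (take i ls @ [(a1 @ cd F @ m, G, b2), (a1, F, m @ dm G @ b2)] @ drop (Suc (Suc i)) ls)"
    apply (subst e)
    apply (rule chn_rep)
    using v apply simp
    using vF q c apply simp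
    using vF q c l1 l2 by (simp add: cp_Id swapL2)
  also have "\<dots> = chn p (swL i ls)" using l1 l2 m_def by (simp add: swL_def Let_def)
  finally show ?thesis using assms(4) by simp
qed

lemma swR_ok: assumes "vc p ls" "Suc i < length ls" "swRc i ls" "chn p (swR i ls) = X"
  shows "chn p ls = X"
proof -
  obtain a1 F b1 where l1: "ls ! i = (a1, F, b1)" by (cases "ls ! i")
  obtain a2 G b2 where l2: "ls ! Suc i = (a2, G, b2)" by (cases "ls ! Suc i")
  define m where "m = drop (length a2 + length (cd G)) a1"
  have c: "a1 = a2 @ cd G @ m" "b2 = m @ dm F @ b1" using assms(3) l1 l2 m_def by (simp_all add: swRc_def Let_def)
  have e: "ls = take i ls @ [ls ! i, ls ! Suc i] @ drop (Suc (Suc i)) ls" using two_split assms(2) .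
  have v: "vc p (take i ls @ [ls ! i, ls ! Suc i] @ drop (Suc (Suc i)) ls)" using e assms(1) by simp
  hence vF: "valid F" "valid G" and q: "ccd p (drop (Suc (Suc i)) ls) = a2 @ dm G @ b2"
    using l1 l2 by auto
  have "chn p ls = chn p (take i ls @ [(a2, G, m @ cd F @ b1), (a2 @ dm G @ m, F, b1)] @ drop (Suc (Suc i)) ls)"
    apply (subst e)
    apply (rule chn_rep)
    using v apply simp
    using vF q c apply simp
    using vF q c l1 l2 by (simp add: cp_Id swapL2)
  also have "\<dots> = chn p (swR i ls)" using l1 l2 m_def by (simp add: swR_def Let_def)
  finally show ?thesis using assms(4) by simp
qed

lemma chn_ctx: "vc p (xs @ [l] @ zs) \<Longrightarrow>
  chn p (xs @ [l] @ zs) = chn (lcd l) xs \<odot> (lay l \<odot> chn p zs)"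
  using chn_app[of p xs "[l] @ zs"] chn_app[of p "[l]" zs] by (simp add: cp_Id)

lemma lay_pl: "valid F \<Longrightarrow> valid G \<Longrightarrow> dm G = dm F \<Longrightarrow> cd G = cd F \<Longrightarrow>
  lay (a, F \<oplus> G, b) = lay (a, F, b) \<oplus> lay (a, G, b)"
  by (simp add: lay.simps pl_tn tn_pl)
lemma lay_sm: "valid F \<Longrightarrow> lay (a, sm r F, b) = sm r (lay (a, F, b))"
  by (simp add: lay.simps sm_tn tn_sm)
lemma lay_Z: "lay (a, Z u v, b) = Z (a @ u @ b) (a @ v @ b)"
  by (simp add: lay.simps Z_tn tn_Z)

lemma pl_at: assumes "vc p ls" "i < length ls" "ls ! i = (a, F \<oplus> G, b)" "valid F" "valid G"
  "dm G = dm F" "cd G = cd F"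
  "chn p (ls[i := (a, F, b)]) \<oplus> chn p (ls[i := (a, G, b)]) = X"
  shows "chn p ls = X"
proof -
  have e: "\<And>l. ls[i := l] = take i ls @ [l] @ drop (Suc i) ls" using assms(2)
    by (simp add: upd_conv_take_nth_drop)
  have e0: "ls = take i ls @ [ls ! i] @ drop (Suc i) ls" using assms(2)
    by (simp add: id_take_nth_drop)
  have v: "vc p (take i ls @ [(a, F \<oplus> G, b)] @ drop (Suc i) ls)" using assms e0 by metis
  have vF: "vc p (take i ls @ [(a, F, b)] @ drop (Suc i) ls)" "vc p (take i ls @ [(a, G, b)] @ drop (Suc i) ls)"
    using v assms by auto
  have "chn p ls = chn p (take i ls @ [(a, F \<oplus> G, b)] @ drop (Suc i) ls)" using e0 assms(3) by metis
  also have "\<dots> = chn p (take i ls @ [(a, F, b)] @ drop (Suc i) ls) \<oplus> chn p (take i ls @ [(a, G, b)] @ drop (Suc i) ls)"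
    using v vF assms(4-7) by (simp only: chn_ctx) (simp add: lay_pl cp_pl pl_cp)
  finally show ?thesis using assms(8) e by simp
qed

lemma sm_at: assumes "vc p ls" "i < length ls" "ls ! i = (a, sm r F, b)" "valid F"
  "sm r (chn p (ls[i := (a, F, b)])) = X"
  shows "chn p ls = X"
proof -
  have e: "\<And>l. ls[i := l] = take i ls @ [l] @ drop (Suc i) ls" using assms(2)
    by (simp add: upd_conv_take_nth_drop)
  have e0: "ls = take i ls @ [ls ! i] @ drop (Suc i) ls" using assms(2)
    by (simp add: id_take_nth_drop)
  have v: "vc p (take i ls @ [(a, sm r F, b)] @ drop (Suc i) ls)" using assms e0 by metis
  have vF: "vc p (take i ls @ [(a, F, b)] @ drop (Suc i) ls)"
    using v assms by auto
  have "chn p ls = chn p (take i ls @ [(a, sm r F, b)] @ drop (Suc i) ls)" using e0 assms(3) by metis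
  also have "\<dots> = sm r (chn p (take i ls @ [(a, F, b)] @ drop (Suc i) ls))"
    using v vF assms(4) by (simp only: chn_ctx) (simp add: lay_sm cp_sm sm_cp)
  finally show ?thesis using assms(5) e by simp
qed

lemma Z_at: assumes "vc p ls" "i < length ls" "ls ! i = (a, Z u v, b)"
  "Z p (ccd p ls) = X"
  shows "chn p ls = X"
proof -
  have e0: "ls = take i ls @ [ls ! i] @ drop (Suc i) ls" using assms(2)
    by (simp add: id_take_nth_drop)
  have v: "vc p (take i ls @ [(a, Z u v, b)] @ drop (Suc i) ls)" using assms e0 by metis
  have cc: "ccd p ls = ccd p (take i ls @ [(a, Z u v, b)] @ drop (Suc i) ls)" using e0 assms(3) by metis
  have "chn p ls = chn p (take i ls @ [(a, Z u v, b)] @ drop (Suc i) ls)" using e0 assms(3) by metis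
  also have "\<dots> = Z p (ccd p ls)"
    using v cc by (simp only: chn_ctx) (simp add: lay_Z cp_Z Z_cp)
  finally show ?thesis using assms(4) by simp
qed

lemma exp_at: assumes "vc p ls" "i < length ls" "ls ! i = (a, chn q ys, b)" "vc q ys"
  "chn p (take i ls @ map (wh a b) ys @ drop (Suc i) ls) = X"
  shows "chn p ls = X"
proof -
  have e0: "ls = take i ls @ [ls ! i] @ drop (Suc i) ls" using assms(2)
    by (simp add: id_take_nth_drop)
  have v: "vc p (take i ls @ [(a, chn q ys, b)] @ drop (Suc i) ls)" using assms e0 by metis
  have hq: "ccd p (drop (Suc i) ls) = a @ q @ b" using v by simp
  have "chn p ls = chn p (take i ls @ [(a, chn q ys, b)] @ drop (Suc i) ls)" using e0 assms(3) by metis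
  also have "\<dots> = chn p (take i ls @ map (wh a b) ys @ drop (Suc i) ls)"
    apply (rule chn_rep)
    using v apply simp
    using v assms(4) hq apply simp
    using v assms(4) hq by (simp add: chn_wh cp_Id)
  finally show ?thesis using assms(5) by simp
qed


lemma rep_at': assumes "chn q ys = chn q ys'" "vc q ys" "vc q ys'" "vc p ls" "ys \<noteq> []"
  "take (length ys) (drop i ls) = map (wh (take (length (fst (ls!i)) - length (fst (hd ys))) (fst (ls!i)))
        (drop (length (snd (snd (hd ys)))) (snd (snd (ls!i))))) ys" "i + length ys \<le> length ls"
  "ccd p (drop (i + length ys) ls) = (take (length (fst (ls!i)) - length (fst (hd ys))) (fst (ls!i))) @ q @
        (drop (length (snd (snd (hd ys)))) (snd (snd (ls!i))))"
  "chn p (take i ls @ map (wh (take (length (fst (ls!i)) - length (fst (hd ys))) (fst (ls!i)))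
        (drop (length (snd (snd (hd ys)))) (snd (snd (ls!i))))) ys' @ drop (i + length ys) ls) = X"
  shows "chn p ls = X"
  using rep_at[OF assms(1-4) assms(6) assms(7) assms(8) assms(9)] .

lemma exp_at': assumes "G = chn q ys" "vc q ys" "vc p ls" "i < length ls" "fst (snd (ls ! i)) = G"
  "chn p (take i ls @ map (wh (fst (ls ! i)) (snd (snd (ls ! i)))) ys @ drop (Suc i) ls) = X"
  shows "chn p ls = X"
proof -
  have "ls ! i = (fst (ls ! i), chn q ys, snd (snd (ls ! i)))" using assms(1,5) by (cases "ls ! i") auto
  from exp_at[OF assms(3,4) this assms(2)] assms(6) show ?thesis by simp
qed

lemma col_at: assumes "G = chn q ys" "vc q ys" "vc p ls" "ys \<noteq> []"
  "take (length ys) (drop i ls) = map (wh (take (length (fst (ls!i)) - length (fst (hd ys))) (fst (ls!i)))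
        (drop (length (snd (snd (hd ys)))) (snd (snd (ls!i))))) ys" "i + length ys \<le> length ls"
  "ccd p (drop (i + length ys) ls) = (take (length (fst (ls!i)) - length (fst (hd ys))) (fst (ls!i))) @ q @
        (drop (length (snd (snd (hd ys)))) (snd (snd (ls!i))))"
  "chn p (take i ls @ [((take (length (fst (ls!i)) - length (fst (hd ys))) (fst (ls!i))), G,
        (drop (length (snd (snd (hd ys)))) (snd (snd (ls!i)))))] @ drop (i + length ys) ls) = X"
  shows "chn p ls = X"
proof -
  have h1: "chn q ys = chn q [([], G, [])]" using assms(1,2)
    by (simp add: chn.simps lay.simps Id_tn tn_Id cp_Id)
  have h2: "vc q [([], G, [])]" using assms(1,2) by simp
  show ?thesis using rep_at'[OF h1 assms(2) h2 assms(3-7)] assms(8) by simp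
qed

lemma rep_pl': assumes "chn q ys = chn q ys1 \<oplus> chn q ys2" "vc q ys" "vc q ys1" "vc q ys2"
  "ccd q ys2 = ccd q ys1" "vc p ls" "ys \<noteq> []"
  "take (length ys) (drop i ls) = map (wh (take (length (fst (ls!i)) - length (fst (hd ys))) (fst (ls!i)))
        (drop (length (snd (snd (hd ys)))) (snd (snd (ls!i))))) ys" "i + length ys \<le> length ls"
  "ccd p (drop (i + length ys) ls) = (take (length (fst (ls!i)) - length (fst (hd ys))) (fst (ls!i))) @ q @
        (drop (length (snd (snd (hd ys)))) (snd (snd (ls!i))))"
  "chn p (take i ls @ map (wh (take (length (fst (ls!i)) - length (fst (hd ys))) (fst (ls!i)))
        (drop (length (snd (snd (hd ys)))) (snd (snd (ls!i))))) ys1 @ drop (i + length ys) ls) \<oplus>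
   chn p (take i ls @ map (wh (take (length (fst (ls!i)) - length (fst (hd ys))) (fst (ls!i)))
        (drop (length (snd (snd (hd ys)))) (snd (snd (ls!i))))) ys2 @ drop (i + length ys) ls) = X"
  shows "chn p ls = X"
proof -
  define a where "a = take (length (fst (ls!i)) - length (fst (hd ys))) (fst (ls!i))"
  define b where "b = drop (length (snd (snd (hd ys)))) (snd (snd (ls!i)))"
  define xs where "xs = take i ls"
  define zs where "zs = drop (i + length ys) ls"
  have e: "ls = xs @ map (wh a b) ys @ zs" using ls_split[OF assms(9)] assms(8) a_def b_def xs_def zs_def by simp
  have qz: "ccd p zs = a @ q @ b" using assms(10) a_def b_def zs_def by simp
  have cc: "ccd q ys1 = ccd q ys" using arg_cong[OF assms(1), of cd] by simp
  have vv: "vc (ccd p (map (wh a b) ys @ zs)) xs" "vc p zs" using assms(6) e by auto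
  have "chn p ls = chn (ccd p (map (wh a b) ys @ zs)) xs \<odot> (chn (ccd p zs) (map (wh a b) ys) \<odot> chn p zs)"
    using assms(6) e chn_app by (metis append_assoc vc_app)
  also have "chn (ccd p zs) (map (wh a b) ys) = lay (a, chn q ys1 \<oplus> chn q ys2, b)"
    using qz assms(1,2) by (simp add: chn_wh)
  also have "\<dots> = lay (a, chn q ys1, b) \<oplus> lay (a, chn q ys2, b)"
    using assms(3,4,5) by (simp add: lay_pl)
  also have "lay (a, chn q ys1, b) = chn (ccd p zs) (map (wh a b) ys1)" using qz assms(3) by (simp add: chn_wh)
  also have "lay (a, chn q ys2, b) = chn (ccd p zs) (map (wh a b) ys2)" using qz assms(4) by (simp add: chn_wh)
  finally have "chn p ls = chn (ccd p (map (wh a b) ys @ zs)) xs \<odot> ((chn (ccd p zs) (map (wh a b) ys1) \<oplus> chn (ccd p zs) (map (wh a b) ys2)) \<odot> chn p zs)" .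
  also have "\<dots> = chn p (xs @ map (wh a b) ys1 @ zs) \<oplus> chn p (xs @ map (wh a b) ys2 @ zs)"
  proof -
    have v1: "vc p (xs @ map (wh a b) ys1 @ zs)" "vc p (xs @ map (wh a b) ys2 @ zs)"
      using vv qz assms(3,4,5) cc by simp_all
    have c1: "ccd p (map (wh a b) ys @ zs) = ccd p (map (wh a b) ys1 @ zs)"
      "ccd p (map (wh a b) ys2 @ zs) = ccd p (map (wh a b) ys1 @ zs)" using qz cc assms(5) by simp_all
    have h1: "chn p (xs @ map (wh a b) ys1 @ zs) = chn (ccd p (map (wh a b) ys1 @ zs)) xs \<odot> (chn (ccd p zs) (map (wh a b) ys1) \<odot> chn p zs)"
      using v1(1) chn_app by (metis append_assoc vc_app)
    have h2: "chn p (xs @ map (wh a b) ys2 @ zs) = chn (ccd p (map (wh a b) ys1 @ zs)) xs \<odot> (chn (ccd p zs) (map (wh a b) ys2) \<odot> chn p zs)"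
      using v1(2) chn_app c1 by (metis append_assoc vc_app)
    show ?thesis unfolding h1 h2 c1(1)
      using v1 vv qz assms(3,4,5) cc c1 by (simp add: pl_cp cp_pl)
  qed
  finally show ?thesis using assms(11) a_def b_def xs_def zs_def by simp
qed

lemma rep_Z': assumes "chn q ys = Z q r" "vc q ys" "vc p ls" "ys \<noteq> []"
  "take (length ys) (drop i ls) = map (wh (take (length (fst (ls!i)) - length (fst (hd ys))) (fst (ls!i)))
        (drop (length (snd (snd (hd ys)))) (snd (snd (ls!i))))) ys" "i + length ys \<le> length ls"
  "ccd p (drop (i + length ys) ls) = (take (length (fst (ls!i)) - length (fst (hd ys))) (fst (ls!i))) @ q @
        (drop (length (snd (snd (hd ys)))) (snd (snd (ls!i))))"
  "Z p (ccd p ls) = X"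
  shows "chn p ls = X"
proof -
  define a where "a = take (length (fst (ls!i)) - length (fst (hd ys))) (fst (ls!i))"
  define b where "b = drop (length (snd (snd (hd ys)))) (snd (snd (ls!i)))"
  define xs where "xs = take i ls"
  define zs where "zs = drop (i + length ys) ls"
  have e: "ls = xs @ map (wh a b) ys @ zs" using ls_split[OF assms(6)] assms(5) a_def b_def xs_def zs_def by simp
  have qz: "ccd p zs = a @ q @ b" using assms(7) a_def b_def zs_def by simp
  have cc: "r = ccd q ys" using arg_cong[OF assms(1), of cd] by simp
  have vv: "vc (ccd p (map (wh a b) ys @ zs)) xs" "vc p zs" using assms(3) e by auto
  have "chn p ls = chn (ccd p (map (wh a b) ys @ zs)) xs \<odot> (chn (ccd p zs) (map (wh a b) ys) \<odot> chn p zs)"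
    using assms(3) e chn_app by (metis append_assoc vc_app)
  also have "chn (ccd p zs) (map (wh a b) ys) = lay (a, Z q r, b)"
    using qz assms(1,2) by (simp add: chn_wh)
  also have "\<dots> = Z (a @ q @ b) (a @ r @ b)" by (simp add: lay_Z)
  also have "chn (ccd p (map (wh a b) ys @ zs)) xs \<odot> (Z (a @ q @ b) (a @ r @ b) \<odot> chn p zs) = Z p (ccd p ls)"
    using vv qz cc e by (simp add: Z_cp cp_Z)
  finally show ?thesis using assms(8) by simp
qed

lemma rep_sm': assumes "chn q ys = sm r (chn q ys')" "vc q ys" "vc q ys'" "vc p ls" "ys \<noteq> []"
  "take (length ys) (drop i ls) = map (wh (take (length (fst (ls!i)) - length (fst (hd ys))) (fst (ls!i)))
        (drop (length (snd (snd (hd ys)))) (snd (snd (ls!i))))) ys" "i + length ys \<le> length ls"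
  "ccd p (drop (i + length ys) ls) = (take (length (fst (ls!i)) - length (fst (hd ys))) (fst (ls!i))) @ q @
        (drop (length (snd (snd (hd ys)))) (snd (snd (ls!i))))"
  "sm r (chn p (take i ls @ map (wh (take (length (fst (ls!i)) - length (fst (hd ys))) (fst (ls!i)))
        (drop (length (snd (snd (hd ys)))) (snd (snd (ls!i))))) ys' @ drop (i + length ys) ls)) = X"
  shows "chn p ls = X"
proof -
  define a where "a = take (length (fst (ls!i)) - length (fst (hd ys))) (fst (ls!i))"
  define b where "b = drop (length (snd (snd (hd ys)))) (snd (snd (ls!i)))"
  define xs where "xs = take i ls"
  define zs where "zs = drop (i + length ys) ls"
  have e: "ls = xs @ map (wh a b) ys @ zs" using ls_split[OF assms(7)] assms(6) a_def b_def xs_def zs_def by simp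
  have qz: "ccd p zs = a @ q @ b" using assms(8) a_def b_def zs_def by simp
  have cc: "ccd q ys' = ccd q ys" using arg_cong[OF assms(1), of cd] by simp
  have vv: "vc (ccd p (map (wh a b) ys @ zs)) xs" "vc p zs" using assms(4) e by auto
  have v1: "vc p (xs @ map (wh a b) ys' @ zs)" using vv qz assms(3) cc by simp
  have "chn p ls = chn (ccd p (map (wh a b) ys @ zs)) xs \<odot> (chn (ccd p zs) (map (wh a b) ys) \<odot> chn p zs)"
    using assms(4) e chn_app by (metis append_assoc vc_app)
  also have "chn (ccd p zs) (map (wh a b) ys) = lay (a, sm r (chn q ys'), b)"
    using qz assms(1,2) by (simp add: chn_wh)
  also have "\<dots> = sm r (chn (ccd p zs) (map (wh a b) ys'))"
    using assms(3) qz by (simp add: lay_sm chn_wh)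
  also have "chn (ccd p (map (wh a b) ys @ zs)) xs \<odot> (sm r (chn (ccd p zs) (map (wh a b) ys')) \<odot> chn p zs)
     = sm r (chn (ccd p (map (wh a b) ys' @ zs)) xs \<odot> (chn (ccd p zs) (map (wh a b) ys') \<odot> chn p zs))"
    using vv v1 qz cc assms(3) by (simp add: sm_cp cp_sm)
  also have "chn (ccd p (map (wh a b) ys' @ zs)) xs \<odot> (chn (ccd p zs) (map (wh a b) ys') \<odot> chn p zs) =
      chn p (xs @ map (wh a b) ys' @ zs)"
    using v1 chn_app by (metis append_assoc vc_app)
  finally show ?thesis using assms(9) a_def b_def xs_def zs_def by simp
qed

end

locale HC = LC C for C :: "('k::comm_ring_1, 'm) lmc" +
  fixes k :: int and x s c d tau :: 'm and e f :: "nat \<Rightarrow> 'm"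
  assumes H: "heis_rels C k x s c d tau e f"
begin

declare chn.simps[simp del] mpow.simps[simp del]

lemmas HH = H[unfolded heis_rels_def]
lemma Hx: "x \<in> Hom C [U] [U]" using HH by simp
lemma Hs: "s \<in> Hom C [U,U] [U,U]" using HH by simp
lemma Hc: "c \<in> Hom C [] [D,U]" using HH by simp
lemma Hd: "d \<in> Hom C [U,D] []" using HH by simp
lemma Htau: "tau \<in> Hom C [D,U] [U,D]" using HH by simp
lemma Hss: "cmp C s s = idm C [U,U]" using HH by simp
lemma Hbraid: "cmp C (tns C s (idm C UP)) (cmp C (tns C (idm C UP) s) (tns C s (idm C UP))) =
      cmp C (tns C (idm C UP) s) (cmp C (tns C s (idm C UP)) (tns C (idm C UP) s))" using HH by simp
lemma Hdot: "cmp C (tns C x (idm C UP)) s =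
      add C (idm C (UP @ UP)) (cmp C s (tns C (idm C UP) x))" using HH by simp
lemma Hzig: "cmp C (tns C d (idm C UP)) (tns C (idm C UP) c) = idm C UP" using HH by simp
lemma Hzag: "cmp C (tns C (idm C DN) d) (tns C c (idm C DN)) = idm C DN" using HH by simp
lemma HI: "(let t = heis_t C s c d in
     if 0 \<le> k then
       (\<forall>r < nat k. e r \<in> Hom C [] (UP @ DN)) \<and>
       add C (cmp C tau t)
         (hsum C (UP @ DN) (UP @ DN)
            (\<lambda>r. cmp C (e r) (cmp C d (tns C (mpow C UP x r) (idm C DN)))) (nat k))
         = idm C (UP @ DN) \<and>
       cmp C t tau = idm C (DN @ UP) \<and>
       (\<forall>r < nat k. cmp C t (e r) = zer C [] (DN @ UP)) \<and>
       (\<forall>r < nat k. cmp C (cmp C d (tns C (mpow C UP x r) (idm C DN))) tau = zer C (DN @ UP) []) \<and>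
       (\<forall>r < nat k. \<forall>r' < nat k.
          cmp C (cmp C d (tns C (mpow C UP x r) (idm C DN))) (e r') =
            (if r = r' then idm C [] else zer C [] []))
     else
       (\<forall>r < nat (-k). f r \<in> Hom C (DN @ UP) []) \<and>
       add C (cmp C t tau)
         (hsum C (DN @ UP) (DN @ UP)
            (\<lambda>r. cmp C (cmp C (tns C (idm C DN) (mpow C UP x r)) c) (f r)) (nat (-k)))
         = idm C (DN @ UP) \<and>
       cmp C tau t = idm C (UP @ DN) \<and>
       (\<forall>r < nat (-k). cmp C tau (cmp C (tns C (idm C DN) (mpow C UP x r)) c) = zer C [] (UP @ DN)) \<and>
       (\<forall>r < nat (-k). cmp C (f r) t = zer C (UP @ DN) []) \<and>
       (\<forall>r < nat (-k). \<forall>r' < nat (-k).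
          cmp C (f r) (cmp C (tns C (idm C DN) (mpow C UP x r')) c) =
            (if r = r' then idm C [] else zer C [] [])))"
  using HH by (elim conjE) assumption

lemma mpow_hom: "mpow C [U] x n \<in> Hom C [U] [U]"
  by (induct n) (auto simp: ax_id Hx mpow.simps intro: ax_cmp)

abbreviation "gx \<equiv> ([U],[U],x)"
abbreviation "gs \<equiv> ([U,U],[U,U],s)"
abbreviation "gc \<equiv> ([],[D,U],c)"
abbreviation "gd \<equiv> ([U,D],[],d)"
abbreviation "gtau \<equiv> ([D,U],[U,D],tau)"
abbreviation "gt \<equiv> ([U,D],[D,U],heis_t C s c d)"
abbreviation "gX r \<equiv> ([U],[U],mpow C [U] x r)"

lemma vgen[simp]: "valid gx" "valid gs" "valid gc" "valid gd" "valid gtau" "valid (gX r)"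
  by (simp_all add: valid_def Hx Hs Hc Hd Htau mpow_hom)

lemma Id_app2: "valid F \<Longrightarrow> Ii a \<otimes> (Ii b \<otimes> F) = Ii (a @ b) \<otimes> F"
  by (simp add: tn_assoc[symmetric] Id_app)

lemmas arr = lay.simps chn.simps Id_tn tn_Id cp_Id Id_cp tn_assoc Id_app Id_app2

definition "Et = (Ii [D] \<otimes> Ii [U]) \<otimes> gd \<odot> (Ii [D] \<otimes> gs) \<otimes> Ii [D] \<odot> (gc \<otimes> Ii [U]) \<otimes> Ii [D]"
lemma Et: "valid Et" "dm Et = [U,D]" "cd Et = [D,U]" "mr Et = heis_t C s c d"
  by (simp_all add: Et_def heis_t_def mr_simps)

lemma ht_hom: "heis_t C s c d \<in> Hom C [U,D] [D,U]"
  using Et by (simp add: valid_def)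

lemma vgt[simp]: "valid gt" by (simp add: valid_def ht_hom)

lemma gt_ch: "gt = chn [U,D] [([D,U],gd,[]),([D],gs,[D]),([],gc,[U,D])]"
proof -
  have "gt = Et" using Et by (simp add: ar_eq)
  also have "\<dots> = chn [U,D] [([D,U],gd,[]),([D],gs,[D]),([],gc,[U,D])]"
    by (simp add: Et_def arr)
  finally show ?thesis .
qed


lemmas ev = swL_def swLc_def swR_def swRc_def Let_def

lemma R_ss: "chn [U,U] [([],gs,[]),([],gs,[])] = chn [U,U] []"
  by (simp add: arr ar_eq mr_simps Hss)
lemma R_braid: "chn [U,U,U] [([],gs,[U]),([U],gs,[]),([],gs,[U])] = chn [U,U,U] [([U],gs,[]),([],gs,[U]),([U],gs,[])]"
  using Hbraid by (simp add: arr ar_eq mr_simps)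
lemma R_dot: "chn [U,U] [([],gx,[U]),([],gs,[])] = chn [U,U] [] \<oplus> chn [U,U] [([],gs,[]),([U],gx,[])]"
  using Hdot by (simp add: arr ar_eq mr_simps)
lemma R_zig: "chn [U] [([],gd,[U]),([U],gc,[])] = chn [U] []"
  using Hzig by (simp add: arr ar_eq mr_simps)
lemma R_zag: "chn [D] [([D],gd,[]),([],gc,[D])] = chn [D] []"
  using Hzag by (simp add: arr ar_eq mr_simps)

lemma T2: "chn [U,U,D] [([],gd,[U]), ([U],gt,[])] = chn [U,U,D] [([U],gd,[]), ([],gs,[D])]"
  apply (rule exp_at'[OF gt_ch, where i=1], simp_all)
  apply (rule swL_ok[where i=0], simp_all add: ev)
  apply (rule swL_ok[where i=1], simp_all add: ev)
  apply (rule rep_at'[OF R_zig, where i=2], simp_all)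
  done


lemma single: "vc p L \<Longrightarrow> chn p L = chn p [([], chn p L, [])]"
  by (simp add: chn.simps lay.simps Id_tn tn_Id cp_Id)

lemma wh_wh[simp]: "wh a b (wh a' b' l) = wh (a @ a') (b' @ b) l"
  by (cases l) auto
lemma wh_wh_comp[simp]: "wh a b \<circ> wh a' b' = wh (a @ a') (b' @ b)"
  by (rule ext) simp
lemma wh_nil[simp]: "wh [] [] l = l"
  by (cases l) auto
lemma map_wh_nil[simp]: "map (wh [] []) L = L"
  by (induct L) auto

lemma whr: "vc (q @ b) (map (wh [] b) ys) = vc q ys" "ccd (q @ b) (map (wh [] b) ys) = ccd q ys @ b"
  using vc_wh[of "[]" q b ys] ccd_wh[of "[]" q b ys] by simp_all
lemma whl: "vc (a @ q) (map (wh a []) ys) = vc q ys" "ccd (a @ q) (map (wh a []) ys) = a @ ccd q ys"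
  using vc_wh[of a q "[]" ys] ccd_wh[of a q "[]" ys] by simp_all

lemma BR_id: assumes "vc (X@[D]) L" "ccd (X@[D]) L = Y"
  shows "chn (X@[D]) L = chn (X@[D]) ([(Y, gd, [])] @ map (wh [] [U,D]) L @ [(X,gc,[D])])"
proof -
  let ?F = "chn (X@[D]) L"
  have "chn (X@[D]) ([(Y, gd, [])] @ map (wh [] [U,D]) L @ [(X,gc,[D])]) =
        chn (X@[D]) ([(Y, gd, [])] @ [([], ?F, [U,D])] @ [(X,gc,[D])])"
  proof -
    have "chn ([] @ (X@[D]) @ [U,D]) (map (wh [] [U,D]) L) = lay ([], ?F, [U,D])"
      using assms(1) by (rule chn_wh)
    hence e: "chn (X @ [D,U,D]) (map (wh [] [U,D]) L) = chn (X @ [D,U,D]) [([], ?F, [U,D])]"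
      using assms by (simp add: chn.simps cp_Id)
    show ?thesis apply (rule chn_rep) using assms e by (simp_all add: whr[of "X@[D]" "[U,D]", simplified])
  qed
  also have "\<dots> = ?F"
    apply (rule swR_ok[where i=0]) using assms apply (simp_all add: ev)
    apply (rule rep_at'[OF R_zag, where i=1]) using assms apply (simp_all)
    using assms by (simp add: chn.simps lay.simps Id_tn tn_Id cp_Id)
  finally show ?thesis by simp
qed

lemma BR_inj: assumes "vc (X@[D]) L1" "vc (X@[D]) L2" "ccd (X@[D]) L1 = Y" "ccd (X@[D]) L2 = Y"
  "chn X (map (wh [] [U]) L1 @ [(X, gc, [])]) = chn X (map (wh [] [U]) L2 @ [(X, gc, [])])"
  shows "chn (X@[D]) L1 = chn (X@[D]) L2"
proof -
  have v: "vc X (map (wh [] [U]) L1 @ [(X, gc, [])])" "vc X (map (wh [] [U]) L2 @ [(X, gc, [])])"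
    using assms vc_wh[of "[]" "X@[D]" "[U]"] by simp_all
  have w: "\<And>L. vc X L \<Longrightarrow> chn (X@[D]) (map (wh [] [D]) L) = lay ([], chn X L, [D])"
    using chn_wh[of X _ "[]" "[D]"] by simp
  have e: "chn (X@[D]) (map (wh [] [U,D]) L1 @ [(X,gc,[D])]) =
        chn (X@[D]) (map (wh [] [U,D]) L2 @ [(X,gc,[D])])"
    using w[OF v(1)] w[OF v(2)] assms(5) by simp
  have "chn (X@[D]) L1 = chn (X@[D]) ([(Y, gd, [])] @ (map (wh [] [U,D]) L1 @ [(X,gc,[D])]) @ [])"
    using BR_id assms by simp
  also have "\<dots> = chn (X@[D]) ([(Y, gd, [])] @ (map (wh [] [U,D]) L2 @ [(X,gc,[D])]) @ [])"
    apply (rule chn_rep) using assms e by (simp_all add: whr[of "X@[D]" "[U,D]", simplified])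
  also have "\<dots> = chn (X@[D]) L2" using BR_id assms by simp
  finally show ?thesis .
qed


lemma BL_id: assumes "vc X L" "ccd X L = [D] @ Y"
  shows "chn X L = chn X ([([D], gd, Y)] @ map (wh [D,U] []) L @ [([],gc,X)])"
proof -
  let ?F = "chn X L"
  have "chn X ([([D], gd, Y)] @ map (wh [D,U] []) L @ [([],gc,X)]) =
        chn X ([([D], gd, Y)] @ [([D,U], ?F, [])] @ [([],gc,X)])"
  proof -
    have "chn ([D,U] @ X @ []) (map (wh [D,U] []) L) = lay ([D,U], ?F, [])"
      using assms(1) by (rule chn_wh)
    hence e: "chn ([D,U] @ X) (map (wh [D,U] []) L) = chn ([D,U] @ X) [([D,U], ?F, [])]"
      using assms by (simp add: chn.simps cp_Id)
    show ?thesis apply (rule chn_rep) using assms e by (simp_all add: whl[of "[D,U]" X, simplified])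
  qed
  also have "\<dots> = ?F"
    apply (rule swR_ok[where i=1]) using assms apply (simp_all add: ev)
    apply (rule rep_at'[OF R_zag, where i=0]) using assms apply (simp_all)
    using assms by (simp add: chn.simps lay.simps Id_tn tn_Id cp_Id)
  finally show ?thesis by simp
qed

lemma BL_inj: assumes "vc X L1" "vc X L2" "ccd X L1 = [D] @ Y" "ccd X L2 = [D] @ Y"
  "chn ([U]@X) ([([], gd, Y)] @ map (wh [U] []) L1) = chn ([U]@X) ([([], gd, Y)] @ map (wh [U] []) L2)"
  shows "chn X L1 = chn X L2"
proof -
  have v: "vc ([U]@X) ([([], gd, Y)] @ map (wh [U] []) L1)" "vc ([U]@X) ([([], gd, Y)] @ map (wh [U] []) L2)"
    using assms by (simp_all add: whl[of "[U]" X, simplified])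
  have w: "\<And>L. vc ([U]@X) L \<Longrightarrow> chn ([D,U]@X) (map (wh [D] []) L) = lay ([D], chn ([U]@X) L, [])"
    using chn_wh[of "[U]@X" _ "[D]" "[]"] by simp
  have e: "chn ([D,U]@X) ([([D], gd, Y)] @ map (wh [D,U] []) L1) =
        chn ([D,U]@X) ([([D], gd, Y)] @ map (wh [D,U] []) L2)"
    using w[OF v(1)] w[OF v(2)] assms(5) by simp
  have "chn X L1 = chn X ([] @ ([([D], gd, Y)] @ map (wh [D,U] []) L1) @ [([],gc,X)])"
    using BL_id assms by simp
  also have "\<dots> = chn X ([] @ ([([D], gd, Y)] @ map (wh [D,U] []) L2) @ [([],gc,X)])"
    apply (rule chn_rep) using assms e by (simp_all add: whl[of "[D,U]" X, simplified])
  also have "\<dots> = chn X L2" using BL_id assms by simp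
  finally show ?thesis .
qed

abbreviation "gsp \<equiv> ([D,D],[D,D],heis_s' C s c d)"

definition "Esp = (Ii [D] \<otimes> Ii [D]) \<otimes> gd \<odot> (Ii [D] \<otimes> gt) \<otimes> Ii [D] \<odot> (gc \<otimes> Ii [D]) \<otimes> Ii [D]"
lemma Esp: "valid Esp" "dm Esp = [D,D]" "cd Esp = [D,D]" "mr Esp = heis_s' C s c d"
  by (simp_all add: Esp_def heis_s'_def mr_simps)
lemma vgsp[simp]: "valid gsp" using Esp by (simp add: valid_def)
lemma gsp_ch: "gsp = chn [D,D] [([D,D],gd,[]),([D],gt,[D]),([],gc,[D,D])]"
proof -
  have "gsp = Esp" using Esp by (simp add: ar_eq)
  also have "\<dots> = chn [D,D] [([D,D],gd,[]),([D],gt,[D]),([],gc,[D,D])]"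
    by (simp add: Esp_def arr)
  finally show ?thesis .
qed

lemma T3: "chn [U] [([],gt,[U]), ([U],gc,[])] = chn [U] [([D],gs,[]), ([],gc,[U])]"
  apply (rule exp_at'[OF gt_ch, where i=0], simp_all)
  apply (rule swL_ok[where i=2], simp_all add: ev)
  apply (rule swL_ok[where i=1], simp_all add: ev)
  apply (rule rep_at'[OF R_zig, where i=0], simp_all)
  done

lemma T2': "chn [U,D,D] [([],gd,[D]), ([U],gsp,[])] = chn [U,D,D] [([D],gd,[]), ([],gt,[D])]"
  apply (rule exp_at'[OF gsp_ch, where i=1], simp_all)
  apply (rule swL_ok[where i=0], simp_all add: ev)
  apply (rule swL_ok[where i=1], simp_all add: ev)
  apply (rule rep_at'[OF R_zig, where i=2], simp_all)
  done

lemma T3': "chn [D] [([D],gt,[]), ([],gc,[D])] = chn [D] [([],gsp,[U]), ([D],gc,[])]"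
  apply (rule sym)
  apply (rule exp_at'[OF gsp_ch, where i=0], simp_all)
  apply (rule swL_ok[where i=2], simp_all add: ev)
  apply (rule swL_ok[where i=1], simp_all add: ev)
  apply (rule rep_at'[OF R_zig, where i=0], simp_all)
  done


lemma BR_inj': "p = X @ [D] \<Longrightarrow> vc p L1 \<Longrightarrow> vc p L2 \<Longrightarrow> ccd p L1 = Y \<Longrightarrow> ccd p L2 = Y \<Longrightarrow>
  chn X (map (wh [] [U]) L1 @ [(X, gc, [])]) = chn X (map (wh [] [U]) L2 @ [(X, gc, [])]) \<Longrightarrow>
  chn p L1 = chn p L2"
  using BR_inj by blast

lemma BL_inj': "p = [U] @ X \<Longrightarrow> vc X L1 \<Longrightarrow> vc X L2 \<Longrightarrow> ccd X L1 = [D] @ Y \<Longrightarrow> ccd X L2 = [D] @ Y \<Longrightarrow>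
  chn p ([([], gd, Y)] @ map (wh [U] []) L1) = chn p ([([], gd, Y)] @ map (wh [U] []) L2) \<Longrightarrow>
  chn X L1 = chn X L2"
  using BL_inj by blast

lemma T1: "chn [U,U,D] [([D],gs,[]), ([],gt,[U]), ([U],gt,[])] = chn [U,U,D] [([],gt,[U]), ([U],gt,[]), ([],gs,[D])]"
  apply (rule BR_inj'[where X="[U,U]" and Y="[D,U,U]"], simp_all)
  apply (rule rep_at'[OF T3, where i=2], simp_all)
  apply (rule swL_ok[where i=1], simp_all add: ev)
  apply (rule rep_at'[OF T3, where i=2], simp_all)
  apply (rule rep_at'[OF R_braid, where i=0], simp_all)
  apply (rule sym)
  apply (rule swL_ok[where i=2], simp_all add: ev)
  apply (rule rep_at'[OF T3, where i=1], simp_all)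
  apply (rule swL_ok[where i=0], simp_all add: ev)
  apply (rule rep_at'[OF T3, where i=1], simp_all)
  apply (rule swL_ok[where i=2], simp_all add: ev)
  done

lemma SS': "chn [D,D] [([],gsp,[]),([],gsp,[])] = chn [D,D] []"
  apply (rule BR_inj'[where X="[D]" and Y="[D,D]"], simp_all)
  apply (rule rep_at'[OF T3'[symmetric], where i=1], simp_all)
  apply (rule BL_inj'[where X="[D]" and Y="[D,U]"], simp_all)
  apply (rule rep_at'[OF T2', where i=0], simp_all)
  apply (rule swL_ok[where i=1], simp_all add: ev)
  apply (rule rep_at'[OF T2, where i=0], simp_all)
  apply (rule rep_at'[OF T3, where i=2], simp_all)
  apply (rule rep_at'[OF R_ss, where i=1], simp_all)
  apply (rule swR_ok[where i=0], simp_all add: ev)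
  apply (rule sym)
  apply (rule swL_ok[where i=0], simp_all add: ev)
  done

lemma T1': "chn [U,D,D] [([],gsp,[U]), ([D],gt,[]), ([],gt,[D])] = chn [U,D,D] [([D],gt,[]), ([],gt,[D]), ([U],gsp,[])]"
  apply (rule BR_inj'[where X="[U,D]" and Y="[D,D,U]"], simp_all)
  apply (rule swL_ok[where i=2], simp_all add: ev)
  apply (rule rep_at'[OF T3, where i=1], simp_all)
  apply (rule swL_ok[where i=0], simp_all add: ev)
  apply (rule rep_at'[OF T3'[symmetric], where i=1], simp_all)
  apply (rule sym)
  apply (rule rep_at'[OF T3'[symmetric], where i=2], simp_all)
  apply (rule swL_ok[where i=1], simp_all add: ev)
  apply (rule rep_at'[OF T3, where i=2], simp_all)
  apply (rule rep_at'[OF T1[symmetric], where i=0], simp_all)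
  apply (rule swR_ok[where i=2], simp_all add: ev)
  done

lemma DT: "chn [U,D] [([D],gx,[]),([],gt,[])] = chn [U,D] [([],gc,[]),([],gd,[])] \<oplus> chn [U,D] [([],gt,[]),([],gx,[D])]"
  apply (rule exp_at'[OF gt_ch, where i=1], simp_all)
  apply (rule swL_ok[where i=0], simp_all add: ev)
  apply (rule rep_pl'[OF R_dot, where i=1], simp_all)
  apply (rule arg_cong2[where f="(\<oplus>)"])
  apply (rule swR_ok[where i=0], simp_all add: ev)
  apply (rule swR_ok[where i=2], simp_all add: ev)
  apply (rule col_at[OF gt_ch, where i=0], simp_all)
  done

lemma SD: "chn [U,U] [([],gs,[]),([],gx,[U])] = chn [U,U] [] \<oplus> chn [U,U] [([U],gx,[]),([],gs,[])]"
  apply (rule rep_at[OF R_ss[symmetric], where i=2 and a="[]" and b="[]"], simp_all)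
  apply (rule rep_pl'[OF R_dot, where i=1], simp_all)
  apply (rule arg_cong2[where f="(\<oplus>)"])
  apply (rule rep_at'[OF R_ss, where i=0], simp_all)
  apply (rule rep_at'[OF R_ss, where i=0], simp_all)
  done


lemma Ii_tn_cp: "valid A \<Longrightarrow> valid B \<Longrightarrow> dm A = cd B \<Longrightarrow> Ii a \<otimes> (A \<odot> B) = (Ii a \<otimes> A) \<odot> (Ii a \<otimes> B)"
  by (simp add: ichg Id_cp)
lemma cp_tn_Ii: "valid A \<Longrightarrow> valid B \<Longrightarrow> dm A = cd B \<Longrightarrow> (A \<odot> B) \<otimes> Ii a = (A \<otimes> Ii a) \<odot> (B \<otimes> Ii a)"
  by (simp add: ichg Id_cp)

lemma gX0: "gX 0 = Ii [U]" by (simp add: Ii_def mpow.simps)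
lemma gXS: "gX (Suc n) = gx \<odot> gX n" by (simp add: cp_def mpow.simps)
lemma gXS': "gX (Suc n) = gX n \<odot> gx"
proof (induct n)
  case 0 thus ?case by (simp add: gXS gX0 cp_Id Id_cp)
next
  case (Suc n)
  have "gX (Suc (Suc n)) = gx \<odot> gX (Suc n)" by (rule gXS)
  also have "\<dots> = gx \<odot> (gX n \<odot> gx)" using Suc by simp
  also have "\<dots> = (gx \<odot> gX n) \<odot> gx" by (simp add: cp_assoc)
  finally show ?case by (simp add: gXS)
qed

abbreviation "gcr r \<equiv> (Ii [D] \<otimes> gX r) \<odot> gc"
abbreviation "gdr r \<equiv> gd \<odot> (gX r \<otimes> Ii [D])"

lemma DTa: "(Ii [D] \<otimes> gx) \<odot> gt = (gc \<odot> gd) \<oplus> (gt \<odot> (gx \<otimes> Ii [D]))"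
  using DT by (simp add: arr)
lemma Hdota: "(gx \<otimes> Ii [U]) \<odot> gs = Ii [U,U] \<oplus> (gs \<odot> (Ii [U] \<otimes> gx))"
  using R_dot by (simp add: arr)
lemma SDa: "gs \<odot> (gx \<otimes> Ii [U]) = Ii [U,U] \<oplus> ((Ii [U] \<otimes> gx) \<odot> gs)"
  using SD by (simp add: arr)

lemma MT: fixes \<Phi> :: "'m ar \<Rightarrow> 'm ar"
  assumes add: "\<And>A B. valid A \<Longrightarrow> valid B \<Longrightarrow> dm A = [U,D] \<Longrightarrow> cd A = [D,U] \<Longrightarrow> dm B = [U,D] \<Longrightarrow> cd B = [D,U] \<Longrightarrow>
      \<Phi> (A \<oplus> B) = \<Phi> A \<oplus> \<Phi> B"
  and val: "\<And>A. valid A \<Longrightarrow> dm A = [U,D] \<Longrightarrow> cd A = [D,U] \<Longrightarrow> valid (\<Phi> A) \<and> dm (\<Phi> A) = P \<and> cd (\<Phi> A) = Q"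
  and z: "\<forall>p q. p + q < n \<longrightarrow> \<Phi> (gcr p \<odot> gdr q) = Z P Q"
  shows "\<Phi> ((Ii [D] \<otimes> gX n) \<odot> gt) = \<Phi> (gt \<odot> (gX n \<otimes> Ii [D]))"
  using add val z
proof (induct n arbitrary: \<Phi>)
  case 0 thus ?case by (simp add: gX0 Id_app cp_Id Id_cp)
next
  case (Suc n)
  let ?Y = "Ii [D] \<otimes> gX n"
  have e1: "(Ii [D] \<otimes> gX (Suc n)) \<odot> gt = (?Y \<odot> (gc \<odot> gd)) \<oplus> ((?Y \<odot> gt) \<odot> (gx \<otimes> Ii [D]))"
  proof -
    have "(Ii [D] \<otimes> gX (Suc n)) \<odot> gt = ?Y \<odot> ((Ii [D] \<otimes> gx) \<odot> gt)"
      by (simp add: gXS' Ii_tn_cp cp_assoc)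
    also have "\<dots> = (?Y \<odot> (gc \<odot> gd)) \<oplus> (?Y \<odot> (gt \<odot> (gx \<otimes> Ii [D])))" by (simp add: DTa cp_pl)
    finally show ?thesis by (simp add: cp_assoc)
  qed
  have e2: "?Y \<odot> (gc \<odot> gd) = gcr n \<odot> gdr 0" by (simp add: gX0 Id_app cp_Id cp_assoc)
  define \<Psi> where "\<Psi> A = \<Phi> (A \<odot> (gx \<otimes> Ii [D]))" for A
  have IH: "\<Psi> (?Y \<odot> gt) = \<Psi> (gt \<odot> (gX n \<otimes> Ii [D]))"
  proof (rule Suc.hyps)
    fix A B assume "valid A" "valid B" "dm A = [U,D]" "cd A = [D,U]" "dm B = [U,D]" "cd B = [D,U]"
    thus "\<Psi> (A \<oplus> B) = \<Psi> A \<oplus> \<Psi> B" unfolding \<Psi>_def using Suc.prems(1) by (simp add: pl_cp)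
  next
    fix A assume "valid A" "dm A = [U,D]" "cd A = [D,U]"
    thus "valid (\<Psi> A) \<and> dm (\<Psi> A) = P \<and> cd (\<Psi> A) = Q" unfolding \<Psi>_def using Suc.prems(2) by simp
  next
    show "\<forall>p q. p + q < n \<longrightarrow> \<Psi> (gcr p \<odot> gdr q) = Z P Q"
    proof (intro allI impI)
      fix p q assume "p + q < n"
      hence "\<Phi> (gcr p \<odot> gdr (Suc q)) = Z P Q" using Suc.prems(3) by simp
      moreover have "gcr p \<odot> gdr (Suc q) = (gcr p \<odot> gdr q) \<odot> (gx \<otimes> Ii [D])"
        by (simp add: gXS' ichg cp_assoc Id_cp)
      ultimately show "\<Psi> (gcr p \<odot> gdr q) = Z P Q" unfolding \<Psi>_def by simp
    qed
  qed
  have "\<Phi> ((Ii [D] \<otimes> gX (Suc n)) \<odot> gt) = \<Phi> (?Y \<odot> (gc \<odot> gd)) \<oplus> \<Psi> (?Y \<odot> gt)"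
    unfolding e1 \<Psi>_def using Suc.prems(1) by simp
  also have "\<Phi> (?Y \<odot> (gc \<odot> gd)) = Z P Q" unfolding e2 using Suc.prems(3) by simp
  also have "Z P Q \<oplus> \<Psi> (?Y \<odot> gt) = \<Psi> (?Y \<odot> gt)"
    unfolding \<Psi>_def using Suc.prems(2)[of "(?Y \<odot> gt) \<odot> (gx \<otimes> Ii [D])"] by (simp add: Z_pl)
  also have "\<Psi> (?Y \<odot> gt) = \<Phi> ((gt \<odot> (gX n \<otimes> Ii [D])) \<odot> (gx \<otimes> Ii [D]))" using IH unfolding \<Psi>_def by simp
  also have "(gt \<odot> (gX n \<otimes> Ii [D])) \<odot> (gx \<otimes> Ii [D]) = gt \<odot> (gX (Suc n) \<otimes> Ii [D])"
    by (simp add: gXS' ichg cp_assoc Id_cp)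
  finally show ?case .
qed


lemma MS1: fixes \<Phi> :: "'m ar \<Rightarrow> 'm ar"
  assumes add: "\<And>A B. valid A \<Longrightarrow> valid B \<Longrightarrow> dm A = [U,U] \<Longrightarrow> cd A = [U,U] \<Longrightarrow> dm B = [U,U] \<Longrightarrow> cd B = [U,U] \<Longrightarrow>
      \<Phi> (A \<oplus> B) = \<Phi> A \<oplus> \<Phi> B"
  and val: "\<And>A. valid A \<Longrightarrow> dm A = [U,U] \<Longrightarrow> cd A = [U,U] \<Longrightarrow> valid (\<Phi> A) \<and> dm (\<Phi> A) = P \<and> cd (\<Phi> A) = Q"
  and z: "\<forall>a b. a + b < n \<longrightarrow> \<Phi> (gX a \<otimes> gX b) = Z P Q"
  shows "\<Phi> ((gX n \<otimes> Ii [U]) \<odot> gs) = \<Phi> (gs \<odot> (Ii [U] \<otimes> gX n))"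
  using add val z
proof (induct n arbitrary: \<Phi>)
  case 0 thus ?case by (simp add: gX0 Id_app cp_Id Id_cp)
next
  case (Suc n)
  let ?Y = "gX n \<otimes> Ii [U]"
  have e1: "(gX (Suc n) \<otimes> Ii [U]) \<odot> gs = ?Y \<oplus> ((?Y \<odot> gs) \<odot> (Ii [U] \<otimes> gx))"
  proof -
    have "(gX (Suc n) \<otimes> Ii [U]) \<odot> gs = ?Y \<odot> ((gx \<otimes> Ii [U]) \<odot> gs)"
      by (simp add: gXS' cp_tn_Ii cp_assoc)
    also have "\<dots> = ?Y \<oplus> (?Y \<odot> (gs \<odot> (Ii [U] \<otimes> gx)))" by (simp add: Hdota cp_pl cp_Id)
    finally show ?thesis by (simp add: cp_assoc)
  qed
  have e2: "?Y = gX n \<otimes> gX 0" by (simp add: gX0)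
  define \<Psi> where "\<Psi> A = \<Phi> (A \<odot> (Ii [U] \<otimes> gx))" for A
  have IH: "\<Psi> (?Y \<odot> gs) = \<Psi> (gs \<odot> (Ii [U] \<otimes> gX n))"
  proof (rule Suc.hyps)
    fix A B assume "valid A" "valid B" "dm A = [U,U]" "cd A = [U,U]" "dm B = [U,U]" "cd B = [U,U]"
    thus "\<Psi> (A \<oplus> B) = \<Psi> A \<oplus> \<Psi> B" unfolding \<Psi>_def using Suc.prems(1) by (simp add: pl_cp)
  next
    fix A assume "valid A" "dm A = [U,U]" "cd A = [U,U]"
    thus "valid (\<Psi> A) \<and> dm (\<Psi> A) = P \<and> cd (\<Psi> A) = Q" unfolding \<Psi>_def using Suc.prems(2) by simp
  next
    show "\<forall>a b. a + b < n \<longrightarrow> \<Psi> (gX a \<otimes> gX b) = Z P Q"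
    proof (intro allI impI)
      fix a b assume "a + b < n"
      hence "\<Phi> (gX a \<otimes> gX (Suc b)) = Z P Q" using Suc.prems(3) by simp
      moreover have "gX a \<otimes> gX (Suc b) = (gX a \<otimes> gX b) \<odot> (Ii [U] \<otimes> gx)"
        by (simp add: gXS' ichg cp_Id)
      ultimately show "\<Psi> (gX a \<otimes> gX b) = Z P Q" unfolding \<Psi>_def by simp
    qed
  qed
  have "\<Phi> ((gX (Suc n) \<otimes> Ii [U]) \<odot> gs) = \<Phi> ?Y \<oplus> \<Psi> (?Y \<odot> gs)"
    unfolding e1 \<Psi>_def using Suc.prems(1) by simp
  also have "\<Phi> ?Y = Z P Q" unfolding e2 using Suc.prems(3) by simp
  also have "Z P Q \<oplus> \<Psi> (?Y \<odot> gs) = \<Psi> (?Y \<odot> gs)"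
    unfolding \<Psi>_def using Suc.prems(2)[of "(?Y \<odot> gs) \<odot> (Ii [U] \<otimes> gx)"] by (simp add: Z_pl)
  also have "\<Psi> (?Y \<odot> gs) = \<Phi> ((gs \<odot> (Ii [U] \<otimes> gX n)) \<odot> (Ii [U] \<otimes> gx))" using IH unfolding \<Psi>_def by simp
  also have "(gs \<odot> (Ii [U] \<otimes> gX n)) \<odot> (Ii [U] \<otimes> gx) = gs \<odot> (Ii [U] \<otimes> gX (Suc n))"
    by (simp add: gXS' ichg cp_assoc Id_cp)
  finally show ?case .
qed

lemma MS2: fixes \<Phi> :: "'m ar \<Rightarrow> 'm ar"
  assumes add: "\<And>A B. valid A \<Longrightarrow> valid B \<Longrightarrow> dm A = [U,U] \<Longrightarrow> cd A = [U,U] \<Longrightarrow> dm B = [U,U] \<Longrightarrow> cd B = [U,U] \<Longrightarrow>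
      \<Phi> (A \<oplus> B) = \<Phi> A \<oplus> \<Phi> B"
  and val: "\<And>A. valid A \<Longrightarrow> dm A = [U,U] \<Longrightarrow> cd A = [U,U] \<Longrightarrow> valid (\<Phi> A) \<and> dm (\<Phi> A) = P \<and> cd (\<Phi> A) = Q"
  and z: "\<forall>a b. a + b < n \<longrightarrow> \<Phi> (gX a \<otimes> gX b) = Z P Q"
  shows "\<Phi> (gs \<odot> (gX n \<otimes> Ii [U])) = \<Phi> ((Ii [U] \<otimes> gX n) \<odot> gs)"
  using add val z
proof (induct n arbitrary: \<Phi>)
  case 0 thus ?case by (simp add: gX0 Id_app cp_Id Id_cp)
next
  case (Suc n)
  let ?Y = "gX n \<otimes> Ii [U]"
  have e1: "gs \<odot> (gX (Suc n) \<otimes> Ii [U]) = ?Y \<oplus> ((Ii [U] \<otimes> gx) \<odot> (gs \<odot> ?Y))"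
  proof -
    have "gs \<odot> (gX (Suc n) \<otimes> Ii [U]) = (gs \<odot> (gx \<otimes> Ii [U])) \<odot> ?Y"
      by (simp add: gXS cp_tn_Ii cp_assoc)
    also have "\<dots> = ?Y \<oplus> (((Ii [U] \<otimes> gx) \<odot> gs) \<odot> ?Y)" by (simp add: SDa pl_cp Id_cp)
    finally show ?thesis by (simp add: cp_assoc)
  qed
  have e2: "?Y = gX n \<otimes> gX 0" by (simp add: gX0)
  define \<Psi> where "\<Psi> A = \<Phi> ((Ii [U] \<otimes> gx) \<odot> A)" for A
  have IH: "\<Psi> (gs \<odot> ?Y) = \<Psi> ((Ii [U] \<otimes> gX n) \<odot> gs)"
  proof (rule Suc.hyps)
    fix A B assume "valid A" "valid B" "dm A = [U,U]" "cd A = [U,U]" "dm B = [U,U]" "cd B = [U,U]"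
    thus "\<Psi> (A \<oplus> B) = \<Psi> A \<oplus> \<Psi> B" unfolding \<Psi>_def using Suc.prems(1) by (simp add: cp_pl)
  next
    fix A assume "valid A" "dm A = [U,U]" "cd A = [U,U]"
    thus "valid (\<Psi> A) \<and> dm (\<Psi> A) = P \<and> cd (\<Psi> A) = Q" unfolding \<Psi>_def using Suc.prems(2) by simp
  next
    show "\<forall>a b. a + b < n \<longrightarrow> \<Psi> (gX a \<otimes> gX b) = Z P Q"
    proof (intro allI impI)
      fix a b assume "a + b < n"
      hence "\<Phi> (gX a \<otimes> gX (Suc b)) = Z P Q" using Suc.prems(3) by simp
      moreover have "gX a \<otimes> gX (Suc b) = (Ii [U] \<otimes> gx) \<odot> (gX a \<otimes> gX b)"
        by (simp add: gXS ichg Id_cp)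
      ultimately show "\<Psi> (gX a \<otimes> gX b) = Z P Q" unfolding \<Psi>_def by simp
    qed
  qed
  have "\<Phi> (gs \<odot> (gX (Suc n) \<otimes> Ii [U])) = \<Phi> ?Y \<oplus> \<Psi> (gs \<odot> ?Y)"
    unfolding e1 \<Psi>_def using Suc.prems(1) by simp
  also have "\<Phi> ?Y = Z P Q" unfolding e2 using Suc.prems(3) by simp
  also have "Z P Q \<oplus> \<Psi> (gs \<odot> ?Y) = \<Psi> (gs \<odot> ?Y)"
    unfolding \<Psi>_def using Suc.prems(2)[of "(Ii [U] \<otimes> gx) \<odot> (gs \<odot> ?Y)"] by (simp add: Z_pl)
  also have "\<Psi> (gs \<odot> ?Y) = \<Phi> ((Ii [U] \<otimes> gx) \<odot> ((Ii [U] \<otimes> gX n) \<odot> gs))" using IH unfolding \<Psi>_def by simp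
  also have "(Ii [U] \<otimes> gx) \<odot> ((Ii [U] \<otimes> gX n) \<odot> gs) = (Ii [U] \<otimes> gX (Suc n)) \<odot> gs"
    by (simp add: gXS ichg cp_assoc[symmetric] Id_cp)
  finally show ?case .
qed

lemma ctx_add: assumes "vc (a @ v @ b) xs" "vc P zs" "ccd P zs = a @ u @ b"
  "valid A" "valid B" "dm A = u" "cd A = v" "dm B = u" "cd B = v"
  shows "chn P (xs @ [(a, A \<oplus> B, b)] @ zs) = chn P (xs @ [(a,A,b)] @ zs) \<oplus> chn P (xs @ [(a,B,b)] @ zs)"
proof -
  have h: "\<And>G. valid G \<Longrightarrow> dm G = u \<Longrightarrow> cd G = v \<Longrightarrow> chn P (xs @ (a,G,b) # zs) = chn (a@v@b) xs \<odot> (lay (a,G,b) \<odot> chn P zs)"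
    using chn_ctx assms(1-3) by simp
  show ?thesis using assms by (simp add: h lay_pl cp_pl pl_cp)
qed

lemma ctx_val: assumes "vc (a @ v @ b) xs" "vc P zs" "ccd P zs = a @ u @ b"
  "valid A" "dm A = u" "cd A = v"
  shows "valid (chn P (xs @ [(a,A,b)] @ zs)) \<and> dm (chn P (xs @ [(a,A,b)] @ zs)) = P \<and>
      cd (chn P (xs @ [(a,A,b)] @ zs)) = ccd (a @ v @ b) xs"
  using assms by simp

lemma take2: "Suc i < length ls \<Longrightarrow> take (Suc (Suc 0)) (drop i ls) = [ls ! i, ls ! Suc i]"
  by (metis Cons_nth_drop_Suc Suc_lessD take_0 take_Suc_Cons)

lemma pair_rep: assumes "vc P ls" "Suc i < length ls" "ls ! i = wh a b ma" "ls ! Suc i = wh a b mb"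
  "vc u [ma, mb]" "vc u [mc, md]" "ccd u [mc,md] = ccd u [ma,mb]"
  "ccd P (drop (Suc (Suc i)) ls) = a @ u @ b"
  "chn P (take i ls @ [(a, chn u [ma,mb], b)] @ drop (Suc (Suc i)) ls) = chn P (take i ls @ [(a, chn u [mc,md], b)] @ drop (Suc (Suc i)) ls)"
  "chn P (take i ls @ [wh a b mc, wh a b md] @ drop (Suc (Suc i)) ls) = X"
  shows "chn P ls = X"
proof -
  have s1: "chn u [ma,mb] = chn u [([], chn u [ma,mb], [])]" by (rule single) (use assms(5) in simp)
  have s2: "chn u [mc,md] = chn u [([], chn u [mc,md], [])]" by (rule single) (use assms(6) in simp)
  have t2: "take (Suc (Suc 0)) (drop i ls) = [ls ! i, ls ! Suc i]" using take2 assms(2) .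
  have "chn P ls = chn P (take i ls @ map (wh a b) [([], chn u [ma,mb], [])] @ drop (i + length [ma,mb]) ls)"
    apply (rule rep_at[OF s1 _ _ assms(1)])
    using assms t2 by simp_all
  also have "\<dots> = chn P (take i ls @ [(a, chn u [ma,mb], b)] @ drop (Suc (Suc i)) ls)" by simp
  also have "\<dots> = chn P (take i ls @ [(a, chn u [mc,md], b)] @ drop (Suc (Suc i)) ls)" by (rule assms(9))
  also have "\<dots> = chn P (take i ls @ map (wh a b) [mc, md] @ drop (Suc (Suc i)) ls)"
  proof -
    let ?L = "take i ls @ [(a, chn u [mc,md], b)] @ drop (Suc (Suc i)) ls"
    have e: "ls = take i ls @ [ls ! i, ls ! Suc i] @ drop (Suc (Suc i)) ls" using two_split assms(2) .
    have v: "vc P (take i ls @ [wh a b ma, wh a b mb] @ drop (Suc (Suc i)) ls)" using e assms(1,3,4) by metis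
    have vL: "vc P ?L" using v assms(5,6,7,8) by (cases ma, cases mb, cases mc, cases md) auto
    show ?thesis
      apply (rule rep_at[OF s2[symmetric] _ _ vL, where i=i and a=a and b=b])
      using assms t2 by (simp_all add: min_def)
  qed
  finally show ?thesis using assms(10) by simp
qed


lemma MTc: assumes "vc (a @ [D,U] @ b) xs" "vc P zs" "ccd P zs = a @ [U,D] @ b"
  "\<forall>p q. p+q<n \<longrightarrow> chn P (xs @ [(a, gcr p \<odot> gdr q, b)] @ zs) = Z P (ccd (a@[D,U]@b) xs)"
  shows "chn P (xs @ [(a, (Ii [D] \<otimes> gX n) \<odot> gt, b)] @ zs) = chn P (xs @ [(a, gt \<odot> (gX n \<otimes> Ii [D]), b)] @ zs)"
  apply (rule MT[where \<Phi> = "\<lambda>A. chn P (xs @ [(a,A,b)] @ zs)" and P=P and Q="ccd (a@[D,U]@b) xs"])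
  using ctx_add[OF assms(1-3)] ctx_val[OF assms(1-3)] assms(4) by simp_all

lemma MS1c: assumes "vc (a @ [U,U] @ b) xs" "vc P zs" "ccd P zs = a @ [U,U] @ b"
  "\<forall>a' b'. a'+b'<n \<longrightarrow> chn P (xs @ [(a, gX a' \<otimes> gX b', b)] @ zs) = Z P (ccd (a@[U,U]@b) xs)"
  shows "chn P (xs @ [(a, (gX n \<otimes> Ii [U]) \<odot> gs, b)] @ zs) = chn P (xs @ [(a, gs \<odot> (Ii [U] \<otimes> gX n), b)] @ zs)"
  apply (rule MS1[where \<Phi> = "\<lambda>A. chn P (xs @ [(a,A,b)] @ zs)" and P=P and Q="ccd (a@[U,U]@b) xs"])
  using ctx_add[OF assms(1-3)] ctx_val[OF assms(1-3)] assms(4) by simp_all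

lemma MS2c: assumes "vc (a @ [U,U] @ b) xs" "vc P zs" "ccd P zs = a @ [U,U] @ b"
  "\<forall>a' b'. a'+b'<n \<longrightarrow> chn P (xs @ [(a, gX a' \<otimes> gX b', b)] @ zs) = Z P (ccd (a@[U,U]@b) xs)"
  shows "chn P (xs @ [(a, gs \<odot> (gX n \<otimes> Ii [U]), b)] @ zs) = chn P (xs @ [(a, (Ii [U] \<otimes> gX n) \<odot> gs, b)] @ zs)"
  apply (rule MS2[where \<Phi> = "\<lambda>A. chn P (xs @ [(a,A,b)] @ zs)" and P=P and Q="ccd (a@[U,U]@b) xs"])
  using ctx_add[OF assms(1-3)] ctx_val[OF assms(1-3)] assms(4) by simp_all

lemma ccd_split: "vc P ls \<Longrightarrow> Suc i < length ls \<Longrightarrow> ccd P ls = ccd (lcd (ls ! i)) (take i ls)"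
  by (metis ccd.simps(2) ccd_app id_take_nth_drop Suc_lessD)

lemma vc_split: assumes "vc P ls" "Suc i < length ls"
  shows "vc (lcd (ls ! i)) (take i ls)" "vc P (drop (Suc (Suc i)) ls)" "ccd P (drop (Suc (Suc i)) ls) = ldm (ls ! Suc i)"
    "ldm (ls ! i) = lcd (ls ! Suc i)"
proof -
  have e: "ls = take i ls @ [ls ! i, ls ! Suc i] @ drop (Suc (Suc i)) ls" using two_split assms(2) .
  have v: "vc P (take i ls @ [ls ! i, ls ! Suc i] @ drop (Suc (Suc i)) ls)" using e assms(1) by simp
  thus "vc (lcd (ls ! i)) (take i ls)" "vc P (drop (Suc (Suc i)) ls)" "ccd P (drop (Suc (Suc i)) ls) = ldm (ls ! Suc i)"
    "ldm (ls ! i) = lcd (ls ! Suc i)" by auto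
qed

lemma MTi: assumes "vc P ls" "Suc i < length ls"
  "ls ! i = (fst (ls ! Suc i) @ [D], gX n, snd (snd (ls ! Suc i)))" "fst (snd (ls ! Suc i)) = gt"
  "\<forall>p q. p + q < n \<longrightarrow> chn P (take i ls @ [(fst (ls ! Suc i), gcr p \<odot> gdr q, snd (snd (ls ! Suc i)))] @ drop (Suc (Suc i)) ls) = Z P (ccd P ls)"
  "chn P (take i ls @ [(fst (ls ! Suc i), gt, snd (snd (ls ! Suc i))), (fst (ls ! Suc i), gX n, [D] @ snd (snd (ls ! Suc i)))] @ drop (Suc (Suc i)) ls) = X"
  shows "chn P ls = X"
proof -
  obtain a b where ab: "ls ! Suc i = (a, gt, b)" using assms(4) by (cases "ls ! Suc i") auto
  have l1: "ls ! i = (a @ [D], gX n, b)" using assms(3) ab by simp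
  note vs = vc_split[OF assms(1,2)]
  have c1: "ccd P ls = ccd (a @ [D,U] @ b) (take i ls)" using ccd_split[OF assms(1,2)] l1 by simp
  show ?thesis
    apply (rule pair_rep[OF assms(1,2), where a=a and b=b and ma="([D], gX n, [])" and mb="([],gt,[])"
          and u="[U,D]" and mc="([],gt,[])" and md="([],gX n,[D])"])
    using l1 ab apply simp
    using ab apply simp
    apply simp apply simp apply simp
    using vs ab apply simp
    using MTc[of a b "take i ls" P "drop (Suc (Suc i)) ls" n] vs l1 ab assms(5) c1 apply (simp add: arr)
    using assms(6) ab by simp
qed

lemma MTi': assumes "vc P ls" "Suc i < length ls"
  "fst (snd (ls ! i)) = gt" "ls ! Suc i = (fst (ls ! i), gX n, [D] @ snd (snd (ls ! i)))"
  "\<forall>p q. p + q < n \<longrightarrow> chn P (take i ls @ [(fst (ls ! i), gcr p \<odot> gdr q, snd (snd (ls ! i)))] @ drop (Suc (Suc i)) ls) = Z P (ccd P ls)"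
  "chn P (take i ls @ [(fst (ls ! i) @ [D], gX n, snd (snd (ls ! i))), (fst (ls ! i), gt, snd (snd (ls ! i)))] @ drop (Suc (Suc i)) ls) = X"
  shows "chn P ls = X"
proof -
  obtain a b where ab: "ls ! i = (a, gt, b)" using assms(3) by (cases "ls ! i") auto
  have l1: "ls ! Suc i = (a, gX n, [D] @ b)" using assms(4) ab by simp
  note vs = vc_split[OF assms(1,2)]
  have c1: "ccd P ls = ccd (a @ [D,U] @ b) (take i ls)" using ccd_split[OF assms(1,2)] ab by simp
  show ?thesis
    apply (rule pair_rep[OF assms(1,2), where a=a and b=b and mb="([], gX n, [D])" and ma="([],gt,[])"
          and u="[U,D]" and md="([],gt,[])" and mc="([D],gX n,[])"])
    using ab apply simp
    using l1 apply simp
    apply simp apply simp apply simp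
    using vs l1 apply simp
    using MTc[of a b "take i ls" P "drop (Suc (Suc i)) ls" n] vs l1 ab assms(5) c1 apply (simp add: arr)
    using assms(6) ab by simp
qed

lemma MS1i: assumes "vc P ls" "Suc i < length ls"
  "ls ! i = (fst (ls ! Suc i), gX n, [U] @ snd (snd (ls ! Suc i)))" "fst (snd (ls ! Suc i)) = gs"
  "\<forall>a' b'. a' + b' < n \<longrightarrow> chn P (take i ls @ [(fst (ls ! Suc i), gX a' \<otimes> gX b', snd (snd (ls ! Suc i)))] @ drop (Suc (Suc i)) ls) = Z P (ccd P ls)"
  "chn P (take i ls @ [(fst (ls ! Suc i), gs, snd (snd (ls ! Suc i))), (fst (ls ! Suc i) @ [U], gX n, snd (snd (ls ! Suc i)))] @ drop (Suc (Suc i)) ls) = X"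
  shows "chn P ls = X"
proof -
  obtain a b where ab: "ls ! Suc i = (a, gs, b)" using assms(4) by (cases "ls ! Suc i") auto
  have l1: "ls ! i = (a, gX n, [U] @ b)" using assms(3) ab by simp
  note vs = vc_split[OF assms(1,2)]
  have c1: "ccd P ls = ccd (a @ [U,U] @ b) (take i ls)" using ccd_split[OF assms(1,2)] l1 by simp
  show ?thesis
    apply (rule pair_rep[OF assms(1,2), where a=a and b=b and ma="([], gX n, [U])" and mb="([],gs,[])"
          and u="[U,U]" and mc="([],gs,[])" and md="([U],gX n,[])"])
    using l1 ab apply simp
    using ab apply simp
    apply simp apply simp apply simp
    using vs ab apply simp
    using MS1c[of a b "take i ls" P "drop (Suc (Suc i)) ls" n] vs l1 ab assms(5) c1 apply (simp add: arr)
    using assms(6) ab by simp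
qed

lemma MS1i': assumes "vc P ls" "Suc i < length ls"
  "fst (snd (ls ! i)) = gs" "ls ! Suc i = (fst (ls ! i) @ [U], gX n, snd (snd (ls ! i)))"
  "\<forall>a' b'. a' + b' < n \<longrightarrow> chn P (take i ls @ [(fst (ls ! i), gX a' \<otimes> gX b', snd (snd (ls ! i)))] @ drop (Suc (Suc i)) ls) = Z P (ccd P ls)"
  "chn P (take i ls @ [(fst (ls ! i), gX n, [U] @ snd (snd (ls ! i))), (fst (ls ! i), gs, snd (snd (ls ! i)))] @ drop (Suc (Suc i)) ls) = X"
  shows "chn P ls = X"
proof -
  obtain a b where ab: "ls ! i = (a, gs, b)" using assms(3) by (cases "ls ! i") auto
  have l1: "ls ! Suc i = (a @ [U], gX n, b)" using assms(4) ab by simp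
  note vs = vc_split[OF assms(1,2)]
  have c1: "ccd P ls = ccd (a @ [U,U] @ b) (take i ls)" using ccd_split[OF assms(1,2)] ab by simp
  show ?thesis
    apply (rule pair_rep[OF assms(1,2), where a=a and b=b and mb="([U], gX n, [])" and ma="([],gs,[])"
          and u="[U,U]" and md="([],gs,[])" and mc="([],gX n,[U])"])
    using ab apply simp
    using l1 apply simp
    apply simp apply simp apply simp
    using vs l1 apply simp
    using MS1c[of a b "take i ls" P "drop (Suc (Suc i)) ls" n] vs l1 ab assms(5) c1 apply (simp add: arr)
    using assms(6) ab by simp
qed

lemma MS2i: assumes "vc P ls" "Suc i < length ls"
  "fst (snd (ls ! i)) = gs" "ls ! Suc i = (fst (ls ! i), gX n, [U] @ snd (snd (ls ! i)))"
  "\<forall>a' b'. a' + b' < n \<longrightarrow> chn P (take i ls @ [(fst (ls ! i), gX a' \<otimes> gX b', snd (snd (ls ! i)))] @ drop (Suc (Suc i)) ls) = Z P (ccd P ls)"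
  "chn P (take i ls @ [(fst (ls ! i) @ [U], gX n, snd (snd (ls ! i))), (fst (ls ! i), gs, snd (snd (ls ! i)))] @ drop (Suc (Suc i)) ls) = X"
  shows "chn P ls = X"
proof -
  obtain a b where ab: "ls ! i = (a, gs, b)" using assms(3) by (cases "ls ! i") auto
  have l1: "ls ! Suc i = (a, gX n, [U] @ b)" using assms(4) ab by simp
  note vs = vc_split[OF assms(1,2)]
  have c1: "ccd P ls = ccd (a @ [U,U] @ b) (take i ls)" using ccd_split[OF assms(1,2)] ab by simp
  show ?thesis
    apply (rule pair_rep[OF assms(1,2), where a=a and b=b and mb="([], gX n, [U])" and ma="([],gs,[])"
          and u="[U,U]" and md="([],gs,[])" and mc="([U],gX n,[])"])
    using ab apply simp
    using l1 apply simp
    apply simp apply simp apply simp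
    using vs l1 apply simp
    using MS2c[of a b "take i ls" P "drop (Suc (Suc i)) ls" n] vs l1 ab assms(5) c1 apply (simp add: arr)
    using assms(6) ab by simp
qed

lemma MS2i': assumes "vc P ls" "Suc i < length ls"
  "ls ! i = (fst (ls ! Suc i) @ [U], gX n, snd (snd (ls ! Suc i)))" "fst (snd (ls ! Suc i)) = gs"
  "\<forall>a' b'. a' + b' < n \<longrightarrow> chn P (take i ls @ [(fst (ls ! Suc i), gX a' \<otimes> gX b', snd (snd (ls ! Suc i)))] @ drop (Suc (Suc i)) ls) = Z P (ccd P ls)"
  "chn P (take i ls @ [(fst (ls ! Suc i), gs, snd (snd (ls ! Suc i))), (fst (ls ! Suc i), gX n, [U] @ snd (snd (ls ! Suc i)))] @ drop (Suc (Suc i)) ls) = X"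
  shows "chn P ls = X"
proof -
  obtain a b where ab: "ls ! Suc i = (a, gs, b)" using assms(4) by (cases "ls ! Suc i") auto
  have l1: "ls ! i = (a @ [U], gX n, b)" using assms(3) ab by simp
  note vs = vc_split[OF assms(1,2)]
  have c1: "ccd P ls = ccd (a @ [U,U] @ b) (take i ls)" using ccd_split[OF assms(1,2)] l1 by simp
  show ?thesis
    apply (rule pair_rep[OF assms(1,2), where a=a and b=b and ma="([U], gX n, [])" and mb="([],gs,[])"
          and u="[U,U]" and mc="([],gs,[])" and md="([],gX n,[U])"])
    using l1 ab apply simp
    using ab apply simp
    apply simp apply simp apply simp
    using vs ab apply simp
    using MS2c[of a b "take i ls" P "drop (Suc (Suc i)) ls" n] vs l1 ab assms(5) c1 apply (simp add: arr)
    using assms(6) ab by simp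
qed


definition hs :: "bool list \<Rightarrow> bool list \<Rightarrow> (nat \<Rightarrow> 'm ar) \<Rightarrow> nat \<Rightarrow> 'm ar" where
  "hs a b G n = (a, b, hsum C a b (\<lambda>r. mr (G r)) n)"
lemma hs0: "hs a b G 0 = Z a b" by (simp add: hs_def Z_def)
lemma hsS: "hs a b G (Suc n) = hs a b G n \<oplus> G n" by (simp add: hs_def pl_def)
lemma hs_dc[simp]: "dm (hs a b G n) = a" "cd (hs a b G n) = b" by (simp_all add: hs_def)
lemma hs_valid: "(\<forall>r<n. valid (G r) \<and> dm (G r) = a \<and> cd (G r) = b) \<Longrightarrow> valid (hs a b G n)"
  by (induct n) (simp_all add: hs0 hsS)

abbreviation "ge r \<equiv> ([],[U,D],e r)"
abbreviation "gf r \<equiv> ([D,U],[],f r)"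

lemma KP: assumes "0 \<le> k" shows
  "(\<forall>r < nat k. e r \<in> Hom C [] [U,D]) \<and>
       add C (cmp C tau (heis_t C s c d))
         (hsum C [U,D] [U,D]
            (\<lambda>r. cmp C (e r) (cmp C d (tns C (mpow C UP x r) (idm C DN)))) (nat k))
         = idm C [U,D] \<and>
       cmp C (heis_t C s c d) tau = idm C [D,U] \<and>
       (\<forall>r < nat k. cmp C (heis_t C s c d) (e r) = zer C [] [D,U]) \<and>
       (\<forall>r < nat k. cmp C (cmp C d (tns C (mpow C UP x r) (idm C DN))) tau = zer C [D,U] []) \<and>
       (\<forall>r < nat k. \<forall>r' < nat k.
          cmp C (cmp C d (tns C (mpow C UP x r) (idm C DN))) (e r') =
            (if r = r' then idm C [] else zer C [] []))"
  using HI assms by (simp add: Let_def)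

lemma KN: assumes "k < 0" shows
  "(\<forall>r < nat (-k). f r \<in> Hom C [D,U] []) \<and>
       add C (cmp C (heis_t C s c d) tau)
         (hsum C [D,U] [D,U]
            (\<lambda>r. cmp C (cmp C (tns C (idm C DN) (mpow C UP x r)) c) (f r)) (nat (-k)))
         = idm C [D,U] \<and>
       cmp C tau (heis_t C s c d) = idm C [U,D] \<and>
       (\<forall>r < nat (-k). cmp C tau (cmp C (tns C (idm C DN) (mpow C UP x r)) c) = zer C [] [U,D]) \<and>
       (\<forall>r < nat (-k). cmp C (f r) (heis_t C s c d) = zer C [U,D] []) \<and>
       (\<forall>r < nat (-k). \<forall>r' < nat (-k).
          cmp C (f r) (cmp C (tns C (idm C DN) (mpow C UP x r')) c) =
            (if r = r' then idm C [] else zer C [] []))"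
  using HI assms by (simp add: Let_def)

lemma KP_e: "0 \<le> k \<Longrightarrow> r < nat k \<Longrightarrow> valid (ge r)"
  using KP by (simp add: valid_def)
lemma KN_f: "k < 0 \<Longrightarrow> r < nat (-k) \<Longrightarrow> valid (gf r)"
  using KN by (simp add: valid_def)

lemma KP2: "0 \<le> k \<Longrightarrow> (gtau \<odot> gt) \<oplus> hs [U,D] [U,D] (\<lambda>r. ge r \<odot> gdr r) (nat k) = Ii [U,D]"
  using KP by (simp add: ar_eq mr_simps hs_def Ii_def)
lemma KP1: "0 \<le> k \<Longrightarrow> chn [D,U] [([],gt,[]),([],gtau,[])] = chn [D,U] []"
  using KP by (simp add: arr ar_eq mr_simps)
lemma KP3: "0 \<le> k \<Longrightarrow> r < nat k \<Longrightarrow> chn [] [([],gt,[]),([],ge r,[])] = Z [] [D,U]"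
  using KP KP_e by (simp add: arr ar_eq mr_simps Z_def)
lemma KP4: assumes "0 \<le> k" "r < nat k" shows "chn [D,U] [([],gd,[]),([],gX r,[D]),([],gtau,[])] = Z [D,U] []"
proof -
  have a: "(gd \<odot> (gX r \<otimes> Ii [D])) \<odot> gtau = Z [D,U] []" using KP assms by (simp add: ar_eq mr_simps Z_def Ii_def)
  thus ?thesis by (simp add: arr cp_assoc)
qed
lemma KP5: assumes "0 \<le> k" "r < nat k" shows "chn [] [([],gd,[]),([],gX r,[D]),([],ge r,[])] = chn [] []"
proof -
  have a: "(gd \<odot> (gX r \<otimes> Ii [D])) \<odot> ge r = Ii []" using KP assms by (simp add: ar_eq mr_simps Ii_def)
  thus ?thesis using KP_e assms by (simp add: arr cp_assoc)
qed
lemma KP5': assumes "0 \<le> k" "r < nat k" "r' < nat k" "r \<noteq> r'" shows "chn [] [([],gd,[]),([],gX r,[D]),([],ge r',[])] = Z [] []"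
proof -
  have a: "(gd \<odot> (gX r \<otimes> Ii [D])) \<odot> ge r' = Z [] []" using KP assms by (simp add: ar_eq mr_simps Z_def Ii_def)
  thus ?thesis using KP_e assms by (simp add: arr cp_assoc)
qed

lemma KN2: "k < 0 \<Longrightarrow> (gt \<odot> gtau) \<oplus> hs [D,U] [D,U] (\<lambda>r. gcr r \<odot> gf r) (nat (-k)) = Ii [D,U]"
  using KN by (simp add: ar_eq mr_simps hs_def Ii_def)
lemma KN1: "k < 0 \<Longrightarrow> chn [U,D] [([],gtau,[]),([],gt,[])] = chn [U,D] []"
  using KN by (simp add: arr ar_eq mr_simps)
lemma KN3: "k < 0 \<Longrightarrow> r < nat (-k) \<Longrightarrow> chn [] [([],gtau,[]),([D],gX r,[]),([],gc,[])] = Z [] [U,D]"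
  using KN by (simp add: arr ar_eq mr_simps Z_def)
lemma KN4: "k < 0 \<Longrightarrow> r < nat (-k) \<Longrightarrow> chn [U,D] [([],gf r,[]),([],gt,[])] = Z [U,D] []"
  using KN KN_f by (simp add: arr ar_eq mr_simps Z_def)
lemma KN5: "k < 0 \<Longrightarrow> r < nat (-k) \<Longrightarrow> chn [] [([],gf r,[]),([D],gX r,[]),([],gc,[])] = chn [] []"
  using KN KN_f by (simp add: arr ar_eq mr_simps)
lemma KN5': "k < 0 \<Longrightarrow> r < nat (-k) \<Longrightarrow> r' < nat (-k) \<Longrightarrow> r \<noteq> r' \<Longrightarrow> chn [] [([],gf r,[]),([D],gX r',[]),([],gc,[])] = Z [] []"
  using KN KN_f by (simp add: arr ar_eq mr_simps Z_def)

lemma K0a: "k \<le> 0 \<Longrightarrow> chn [U,D] [([],gtau,[]),([],gt,[])] = chn [U,D] []"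
proof (cases "k < 0")
  case True thus ?thesis using KN1 by simp
next
  case False
  assume "k \<le> 0" hence k0: "k = 0" using False by simp
  have "(gtau \<odot> gt) \<oplus> hs [U,D] [U,D] (\<lambda>r. ge r \<odot> gdr r) (nat k) = Ii [U,D]" using KP2 k0 by simp
  hence "gtau \<odot> gt = Ii [U,D]" using k0 by (simp add: hs0 pl_Z)
  thus ?thesis by (simp add: arr)
qed

lemma lay_gdr: "lay (X, gdr r, Y) = lay (X, gd, Y) \<odot> lay (X, gX r, [D] @ Y)"
proof -
  have "lay (X, gdr r, Y) = lay (X, gd, Y) \<odot> lay (X, gX r \<otimes> Ii [D], Y)" by (rule lay_cp) simp_all
  also have "lay (X, gX r \<otimes> Ii [D], Y) = lay (X, gX r, [D] @ Y)" by (simp add: lay.simps tn_assoc Id_app)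
  finally show ?thesis .
qed
lemma lay_gcr: "lay (X, gcr r, Y) = lay (X @ [D], gX r, Y) \<odot> lay (X, gc, Y)"
proof -
  have "lay (X, gcr r, Y) = lay (X, Ii [D] \<otimes> gX r, Y) \<odot> lay (X, gc, Y)" by (rule lay_cp) simp_all
  also have "lay (X, Ii [D] \<otimes> gX r, Y) = lay (X @ [D], gX r, Y)" by (simp add: lay.simps tn_assoc Id_app[symmetric])
  finally show ?thesis .
qed

lemma DLt: assumes "0 \<le> k" "vc p L1" "vc p L2" "ccd p L1 = X @ [U,D] @ Y" "ccd p L2 = X @ [U,D] @ Y"
  "chn p ((X,gt,Y) # L1) = chn p ((X,gt,Y) # L2)"
  "\<forall>r < nat k. chn p ((X,gd,Y) # (X, gX r, [D] @ Y) # L1) = chn p ((X,gd,Y) # (X, gX r, [D] @ Y) # L2)"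
  shows "chn p L1 = chn p L2"
proof -
  let ?S = "\<lambda>n. hs [U,D] [U,D] (\<lambda>r. ge r \<odot> gdr r) n"
  have vS: "\<And>n. n \<le> nat k \<Longrightarrow> valid (?S n)" using KP_e[OF assms(1)] by (intro hs_valid) auto
  have ind: "\<And>n. n \<le> nat k \<Longrightarrow> lay (X, ?S n, Y) \<odot> chn p L1 = lay (X, ?S n, Y) \<odot> chn p L2"
  proof -
    fix n show "n \<le> nat k \<Longrightarrow> lay (X, ?S n, Y) \<odot> chn p L1 = lay (X, ?S n, Y) \<odot> chn p L2"
    proof (induct n)
      case 0 thus ?case using assms by (simp add: hs0 lay_Z Z_cp)
    next
      case (Suc n)
      have vn: "valid (ge n)" using KP_e[OF assms(1)] Suc by simp
      have v: "valid (?S n)" using vS Suc by simp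
      have e: "\<And>L. vc p L \<Longrightarrow> ccd p L = X @ [U,D] @ Y \<Longrightarrow> lay (X, ?S (Suc n), Y) \<odot> chn p L =
          (lay (X, ?S n, Y) \<odot> chn p L) \<oplus> (lay (X, ge n, Y) \<odot> chn p ((X,gd,Y) # (X, gX n, [D] @ Y) # L))"
        using vn v by (simp add: hsS lay_pl lay_cp lay_gdr chn.simps pl_cp cp_assoc)
      show ?case using e[OF assms(2,4)] e[OF assms(3,5)] Suc assms(7) by simp
    qed
  qed
  have e2: "\<And>L. vc p L \<Longrightarrow> ccd p L = X @ [U,D] @ Y \<Longrightarrow> chn p L =
      (lay (X, gtau, Y) \<odot> chn p ((X,gt,Y) # L)) \<oplus> (lay (X, ?S (nat k), Y) \<odot> chn p L)"
  proof -
    fix L assume a: "vc p L" "ccd p L = X @ [U,D] @ Y"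
    have "chn p L = lay (X, Ii [U,D], Y) \<odot> chn p L" using a by (simp add: lay_Id Id_cp)
    also have "\<dots> = lay (X, (gtau \<odot> gt) \<oplus> ?S (nat k), Y) \<odot> chn p L" using KP2[OF assms(1)] by simp
    also have "\<dots> = (lay (X, gtau, Y) \<odot> chn p ((X,gt,Y) # L)) \<oplus> (lay (X, ?S (nat k), Y) \<odot> chn p L)"
      using a vS[of "nat k"] by (simp add: lay_pl lay_cp chn.simps pl_cp cp_assoc)
    finally show "chn p L = (lay (X, gtau, Y) \<odot> chn p ((X,gt,Y) # L)) \<oplus> (lay (X, ?S (nat k), Y) \<odot> chn p L)" .
  qed
  show ?thesis using e2[OF assms(2,4)] e2[OF assms(3,5)] assms(6) ind[of "nat k"] by simp
qed

lemma DLs: assumes "k < 0" "p = X @ [D,U] @ Y" "vc p L1" "vc p L2" "ccd p L2 = ccd p L1"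
  "chn (X@[U,D]@Y) (L1 @ [(X,gt,Y)]) = chn (X@[U,D]@Y) (L2 @ [(X,gt,Y)])"
  "\<forall>r < nat (-k). chn (X@Y) (L1 @ [(X@[D], gX r, Y), (X, gc, Y)]) = chn (X@Y) (L2 @ [(X@[D], gX r, Y), (X, gc, Y)])"
  shows "chn p L1 = chn p L2"
proof -
  let ?S = "\<lambda>n. hs [D,U] [D,U] (\<lambda>r. gcr r \<odot> gf r) n"
  have vS: "\<And>n. n \<le> nat (-k) \<Longrightarrow> valid (?S n)" using KN_f[OF assms(1)] by (intro hs_valid) auto
  have ap1: "\<And>L. vc p L \<Longrightarrow> chn (X @ U # D # Y) (L @ [(X,gt,Y)]) = chn p L \<odot> lay (X, gt, Y)"
    using assms(2) by (simp add: chn_app chn.simps cp_Id)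
  have ap2: "\<And>L r. vc p L \<Longrightarrow> chn (X@Y) (L @ [(X @ [D], gX r, Y), (X, gc, Y)]) = chn p L \<odot> lay (X, gcr r, Y)"
    using assms(2) by (simp add: chn_app chn.simps cp_Id lay_gcr cp_assoc)
  have ind: "\<And>n. n \<le> nat (-k) \<Longrightarrow> chn p L1 \<odot> lay (X, ?S n, Y) = chn p L2 \<odot> lay (X, ?S n, Y)"
  proof -
    fix n show "n \<le> nat (-k) \<Longrightarrow> chn p L1 \<odot> lay (X, ?S n, Y) = chn p L2 \<odot> lay (X, ?S n, Y)"
    proof (induct n)
      case 0 thus ?case using assms by (simp add: hs0 lay_Z cp_Z)
    next
      case (Suc n)
      have vn: "valid (gf n)" using KN_f[OF assms(1)] Suc by simp
      have v: "valid (?S n)" using vS Suc by simp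
      have e: "\<And>L. vc p L \<Longrightarrow> chn p L \<odot> lay (X, ?S (Suc n), Y) =
          (chn p L \<odot> lay (X, ?S n, Y)) \<oplus> (chn (X@Y) (L @ [(X@[D], gX n, Y), (X, gc, Y)]) \<odot> lay (X, gf n, Y))"
        using vn v assms(2) by (simp add: ap2 hsS lay_pl lay_cp cp_pl cp_assoc)
      show ?case using e[OF assms(3)] e[OF assms(4)] Suc assms(7) by simp
    qed
  qed
  have e2: "\<And>L. vc p L \<Longrightarrow> chn p L =
      (chn (X@[U,D]@Y) (L @ [(X,gt,Y)]) \<odot> lay (X, gtau, Y)) \<oplus> (chn p L \<odot> lay (X, ?S (nat (-k)), Y))"
  proof -
    fix L assume a: "vc p L"
    have "chn p L = chn p L \<odot> lay (X, Ii [D,U], Y)" using a assms(2) by (simp add: lay_Id cp_Id)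
    also have "\<dots> = chn p L \<odot> lay (X, (gt \<odot> gtau) \<oplus> ?S (nat (-k)), Y)" using KN2[OF assms(1)] by simp
    also have "\<dots> = (chn (X@[U,D]@Y) (L @ [(X,gt,Y)]) \<odot> lay (X, gtau, Y)) \<oplus> (chn p L \<odot> lay (X, ?S (nat (-k)), Y))"
      using a vS[of "nat (-k)"] assms(2) by (simp add: ap1 lay_pl lay_cp cp_pl cp_assoc)
    finally show "chn p L = (chn (X@[U,D]@Y) (L @ [(X,gt,Y)]) \<odot> lay (X, gtau, Y)) \<oplus> (chn p L \<odot> lay (X, ?S (nat (-k)), Y))" .
  qed
  show ?thesis using e2[OF assms(3)] e2[OF assms(4)] assms(6) ind[of "nat (-k)"] by simp
qed

lemma INJpre: assumes "0 \<le> k" "p = X @ [D,U] @ Y" "vc p L1" "vc p L2"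
  "chn (X@[U,D]@Y) (L1 @ [(X,gt,Y)]) = chn (X@[U,D]@Y) (L2 @ [(X,gt,Y)])"
  shows "chn p L1 = chn p L2"
proof -
  have t: "gt \<odot> gtau = Ii [D,U]" using KP1[OF assms(1)] by (simp add: arr)
  have e: "\<And>L. vc p L \<Longrightarrow> chn p L = chn (X@[U,D]@Y) (L @ [(X,gt,Y)]) \<odot> lay (X, gtau, Y)"
  proof -
    fix L assume a: "vc p L"
    have "chn p L = chn p L \<odot> lay (X, gt \<odot> gtau, Y)" using a assms(2) t by (simp add: lay_Id cp_Id)
    also have "\<dots> = chn (X@[U,D]@Y) (L @ [(X,gt,Y)]) \<odot> lay (X, gtau, Y)"
      using a assms(2) by (simp add: chn_app chn.simps cp_Id lay_cp cp_assoc)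
    finally show "chn p L = chn (X@[U,D]@Y) (L @ [(X,gt,Y)]) \<odot> lay (X, gtau, Y)" .
  qed
  show ?thesis using e[OF assms(3)] e[OF assms(4)] assms(5) by simp
qed

lemma INJpost: assumes "k \<le> 0" "vc p L1" "vc p L2" "ccd p L1 = X @ [U,D] @ Y" "ccd p L2 = X @ [U,D] @ Y"
  "chn p ((X,gt,Y) # L1) = chn p ((X,gt,Y) # L2)"
  shows "chn p L1 = chn p L2"
proof -
  have t: "gtau \<odot> gt = Ii [U,D]" using K0a[OF assms(1)] by (simp add: arr)
  have e: "\<And>L. vc p L \<Longrightarrow> ccd p L = X @ [U,D] @ Y \<Longrightarrow> chn p L = lay (X, gtau, Y) \<odot> chn p ((X,gt,Y) # L)"
  proof -
    fix L assume a: "vc p L" "ccd p L = X @ [U,D] @ Y"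
    have "chn p L = lay (X, gtau \<odot> gt, Y) \<odot> chn p L" using a t by (simp add: lay_Id Id_cp)
    also have "\<dots> = lay (X, gtau, Y) \<odot> chn p ((X,gt,Y) # L)"
      using a by (simp add: chn.simps lay_cp cp_assoc)
    finally show "chn p L = lay (X, gtau, Y) \<odot> chn p ((X,gt,Y) # L)" .
  qed
  show ?thesis using e[OF assms(2,4)] e[OF assms(3,5)] assms(6) by simp
qed


lemma gXc: "gX (Suc n) = chn [U] [([],gx,[]),([],gX n,[])]" by (simp add: gXS arr)
lemma gXc': "gX (Suc n) = chn [U] [([],gX n,[]),([],gx,[])]" by (simp add: gXS' arr)
lemma gcrdr: "gcr p \<odot> gdr q = chn [U,D] [([D],gX p,[]),([],gc,[]),([],gd,[]),([],gX q,[D])]"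
  by (simp add: arr cp_assoc)
lemma gXX: "gX a \<otimes> gX b = chn [U,U] [([],gX a,[U]),([U],gX b,[])]"
  by (simp add: arr ichg Id_cp cp_Id)

lemma plZ_I: "A = X \<Longrightarrow> B = Z p q \<Longrightarrow> valid X \<Longrightarrow> dm X = p \<Longrightarrow> cd X = q \<Longrightarrow> A \<oplus> B = X"
  by (simp add: pl_Z)

abbreviation "gdp \<equiv> ([D,U],[],heis_d' C k x d tau f)"
abbreviation "gcp \<equiv> ([],[U,D],heis_c' C k x c tau e)"

context fixes DP CP :: "'m ar"
  assumes vDP[simp]: "valid DP" and vCP[simp]: "valid CP"
  and tDP[simp]: "dm DP = [D,U]" "cd DP = []" and tCP[simp]: "dm CP = []" "cd CP = [U,D]"
  and ZZ1: "chn [U] [([U],DP,[]),([],CP,[U])] = chn [U] []"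
  and ZZ2: "chn [D] [([],DP,[D]),([D],CP,[])] = chn [D] []"
begin

lemma M13: assumes HP: "chn [D,U,U] [([],DP,[U]),([D],gs,[])] = chn [D,U,U] [([U],DP,[]),([],gtau,[U])]"
  shows "chn [U] [([],gs,[D]),([U],CP,[])] = chn [U] [([U],gtau,[]),([],CP,[U])]"
  apply (rule rep_at[OF ZZ1[symmetric], where i=0 and a="[]" and b="[U,D]"], simp_all)
  apply (rule swL_ok[where i=1], simp_all add: ev)
  apply (rule rep_at'[OF HP, where i=0], simp_all)
  apply (rule swL_ok[where i=2], simp_all add: ev)
  apply (rule swL_ok[where i=1], simp_all add: ev)
  apply (rule rep_at'[OF ZZ2, where i=0], simp_all)
  done

lemma M31: assumes HP: "chn [U] [([],gs,[D]),([U],CP,[])] = chn [U] [([U],gtau,[]),([],CP,[U])]"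
  shows "chn [D,U,U] [([],DP,[U]),([D],gs,[])] = chn [D,U,U] [([U],DP,[]),([],gtau,[U])]"
  apply (rule rep_at[OF ZZ1[symmetric], where i=2 and a="[D,U]" and b="[]"], simp_all)
  apply (rule swL_ok[where i=1], simp_all add: ev)
  apply (rule swL_ok[where i=0], simp_all add: ev)
  apply (rule rep_at'[OF HP, where i=2], simp_all)
  apply (rule swL_ok[where i=1], simp_all add: ev)
  apply (rule rep_at'[OF ZZ2, where i=2], simp_all)
  done

lemma M24: assumes HP: "chn [D,D,U] [([D],DP,[]),([],gsp,[U])] = chn [D,D,U] [([],DP,[D]),([D],gtau,[])]"
  shows "chn [D] [([U],gsp,[]),([],CP,[D])] = chn [D] [([],gtau,[D]),([D],CP,[])]"
  apply (rule rep_at[OF ZZ2[symmetric], where i=0 and a="[U,D]" and b="[]"], simp_all)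
  apply (rule swR_ok[where i=1], simp_all add: ev)
  apply (rule rep_at'[OF HP, where i=0], simp_all)
  apply (rule swR_ok[where i=2], simp_all add: ev)
  apply (rule swR_ok[where i=1], simp_all add: ev)
  apply (rule rep_at'[OF ZZ1, where i=0], simp_all)
  done

lemma M42: assumes HP: "chn [D] [([U],gsp,[]),([],CP,[D])] = chn [D] [([],gtau,[D]),([D],CP,[])]"
  shows "chn [D,D,U] [([D],DP,[]),([],gsp,[U])] = chn [D,D,U] [([],DP,[D]),([D],gtau,[])]"
  apply (rule rep_at[OF ZZ2[symmetric], where i=2 and a="[]" and b="[D,U]"], simp_all)
  apply (rule swR_ok[where i=1], simp_all add: ev)
  apply (rule rep_at'[OF HP, where i=2], simp_all)
  apply (rule swR_ok[where i=0], simp_all add: ev)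
  apply (rule swR_ok[where i=1], simp_all add: ev)
  apply (rule rep_at'[OF ZZ1, where i=2], simp_all)
  done

end

lemma sm_add: "valid F \<Longrightarrow> sm (r + q) F = sm r F \<oplus> sm q F"
  by (simp add: ar_eq mr_simps valid_def) (metis ax_smuladd)
lemma sm_0: "valid F \<Longrightarrow> sm 0 F = Z (dm F) (cd F)"
  by (simp add: ar_eq mr_simps valid_def smul0)
lemma neg_lem: assumes "valid A" "valid W" "dm W = dm A" "cd W = cd A" "A \<oplus> W = Z (dm A) (cd A)"
  shows "sm (-1) W = A"
proof -
  have "sm (-1) W = Z (dm A) (cd A) \<oplus> sm (-1) W" using assms by (simp add: Z_pl)
  also have "\<dots> = (A \<oplus> W) \<oplus> sm (-1) W" using assms(5) by simp
  also have "\<dots> = A \<oplus> (W \<oplus> sm (-1) W)" by (rule pl_assoc) (use assms in simp_all)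
  also have "W \<oplus> sm (-1) W = sm 0 W" using sm_add[of W 1 "-1"] sm_1[of W] assms(2) by simp
  also have "\<dots> = Z (dm A) (cd A)" using assms by (simp add: sm_0)
  also have "A \<oplus> Z (dm A) (cd A) = A" using assms by (simp add: pl_Z)
  finally show ?thesis .
qed

lemma gdp_ge: "0 \<le> k \<Longrightarrow> gdp = chn [D,U] [([],gd,[]),([],gX (nat k),[D]),([],gtau,[])]"
  by (simp add: heis_d'_def arr ar_eq mr_simps)
lemma gcp_le: "\<not> 0 < k \<Longrightarrow> gcp = chn [] [([],gtau,[]),([D],gX (nat (-k)),[]),([],gc,[])]"
  by (simp add: heis_c'_def arr ar_eq mr_simps)
lemma gcp_gt: "0 < k \<Longrightarrow> gcp = sm (-1) (ge (nat k - 1))"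
  by (simp add: heis_c'_def sm_def)

context assumes kp: "0 < k"
begin

lemma kp0: "0 \<le> k" using kp by simp
lemma kpos[simp]: "0 < nat k" using kp by simp
lemma vge[simp]: "r < nat k \<Longrightarrow> valid (ge r)" using KP_e kp by simp
lemma vgek[simp]: "valid (ge (nat k - Suc 0))" using kp by simp
lemma kl1[simp]: "nat k - Suc 0 < nat k" using kp by simp

lemma TE: assumes "b < nat k"
  shows "chn [] [([],gt,[]),([],gX b,[D]),([],ge (nat k - 1),[])] = Z [] [D,U]"
  apply (rule MTi'[where i=0 and n=b], simp_all)
  subgoal
    apply (intro allI impI)
    subgoal for p q
      apply (rule exp_at'[OF gcrdr, where i=0], simp_all)
      apply (rule rep_Z'[OF KP5'[OF kp0, of q "nat k - 1"], where i=2])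
      using assms by simp_all
    done
  apply (rule rep_Z'[OF KP3[OF kp0], where i=1])
  by simp_all

lemma P3p: "chn [U] [([],gs,[D]),([U],ge (nat k - 1),[])] = chn [U] [([U],gtau,[]),([],ge (nat k - 1),[U])]"
  apply (rule DLt[OF kp0, where X="[U]" and Y="[]"])
  apply (simp_all)
  subgoal
    apply (rule sym)
    apply (rule rep_at'[OF KP1[OF kp0], where i=0], simp_all)
    apply (rule sym)
    apply (rule DLt[OF kp0, where X="[]" and Y="[U]"])
    apply (simp_all)
    subgoal
      apply (rule rep_at'[OF T1[symmetric], where i=0], simp_all)
      apply (rule rep_Z'[OF KP3[OF kp0], where i=2], simp_all)
      apply (rule sym)
      apply (rule rep_Z'[OF KP3[OF kp0], where i=0], simp_all)
      done
    subgoal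
      apply (intro allI impI)
      subgoal for j
        apply (rule swL_ok[where i=1], simp_all add: ev)
        apply (rule rep_at'[OF T2, where i=0], simp_all)
        apply (rule MS1i[where i=2 and n=j], simp_all)
        subgoal
          apply (intro allI impI)
          subgoal for a b
            apply (rule exp_at'[OF gXX, where i=2], simp_all)
            apply (rule swL_ok[where i=2], simp_all add: ev)
            apply (rule swL_ok[where i=3], simp_all add: ev)
            apply (rule rep_at'[OF T2[symmetric], where i=0], simp_all)
            apply (rule rep_Z'[OF TE[of b], where i=1])
            by simp_all
          done
        apply (rule rep_at'[OF R_ss, where i=1], simp_all)
        apply (cases "j = nat k - 1")
        subgoal
          apply (rule rep_at'[OF KP5[OF kp0, of j], where i=0])
          apply simp_all
          apply (rule sym)
          apply (rule rep_at'[OF KP5[OF kp0, of j], where i=0])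
          by simp_all
        subgoal
          apply (rule rep_Z'[OF KP5'[OF kp0, of j "nat k - 1"], where i=0])
          apply simp_all
          apply (rule sym)
          apply (rule rep_Z'[OF KP5'[OF kp0, of j "nat k - 1"], where i=0])
          by simp_all
        done
      done
    done
  subgoal
    apply (intro allI impI)
    subgoal for j
      apply (rule MS2i'[where i=1 and n=j], simp_all)
      subgoal
        apply (intro allI impI)
        subgoal for a b
          apply (rule exp_at'[OF gXX, where i=1], simp_all)
          apply (rule swL_ok[where i=1], simp_all add: ev)
          apply (rule swL_ok[where i=2], simp_all add: ev)
          apply (rule rep_Z'[OF KP5'[OF kp0, of b "nat k - 1"], where i=0])
          by simp_all
        done
      apply (rule rep_at'[OF T2[symmetric], where i=0], simp_all)
      apply (rule swL_ok[where i=2], simp_all add: ev)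
      apply (rule rep_Z'[OF KP3[OF kp0], where i=1], simp_all)
      apply (rule sym)
      apply (rule rep_Z'[OF KP4[OF kp0], where i=0], simp_all)
      done
    done
  done

lemma P4p: "chn [D] [([U],gsp,[]),([],ge (nat k - 1),[D])] = chn [D] [([],gtau,[D]),([D],ge (nat k - 1),[])]"
  apply (rule DLt[OF kp0, where X="[]" and Y="[D]"])
  apply (simp_all)
  subgoal
    apply (rule sym)
    apply (rule rep_at'[OF KP1[OF kp0], where i=0], simp_all)
    apply (rule sym)
    apply (rule DLt[OF kp0, where X="[D]" and Y="[]"])
    apply (simp_all)
    subgoal
      apply (rule rep_at'[OF T1'[symmetric], where i=0], simp_all)
      apply (rule rep_Z'[OF KP3[OF kp0], where i=2], simp_all)
      apply (rule sym)
      apply (rule rep_Z'[OF KP3[OF kp0], where i=0], simp_all)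
      done
    subgoal
      apply (intro allI impI)
      subgoal for j
        apply (rule MTi[where i=1 and n=j], simp_all)
        subgoal
          apply (intro allI impI)
          subgoal for p q
            apply (rule exp_at'[OF gcrdr, where i=1], simp_all)
            apply (rule swL_ok[where i=4], simp_all add: ev)
            apply (rule rep_at'[OF T2', where i=3], simp_all)
            apply (rule rep_Z'[OF TE[of q], where i=4])
            by simp_all
          done
        apply (rule rep_at'[OF T2'[symmetric], where i=0], simp_all)
        apply (rule swR_ok[where i=1], simp_all add: ev)
        apply (rule rep_at'[OF SS', where i=2], simp_all)
        apply (cases "j = nat k - 1")
        subgoal
          apply (rule rep_at'[OF KP5[OF kp0, of j], where i=0])
          apply simp_all
          apply (rule sym)
          apply (rule rep_at'[OF KP5[OF kp0, of j], where i=0])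
          by simp_all
        subgoal
          apply (rule rep_Z'[OF KP5'[OF kp0, of j "nat k - 1"], where i=0])
          apply simp_all
          apply (rule sym)
          apply (rule rep_Z'[OF KP5'[OF kp0, of j "nat k - 1"], where i=0])
          by simp_all
        done
      done
    done
  subgoal
    apply (intro allI impI)
    subgoal for j
      apply (rule swL_ok[where i=1], simp_all add: ev)
      apply (rule rep_at'[OF T2', where i=0], simp_all)
      apply (rule rep_Z'[OF TE[of j], where i=1], simp_all)
      apply (rule sym)
      apply (rule rep_Z'[OF KP4[OF kp0], where i=0], simp_all)
      done
    done
  done


lemma vgdp_p[simp]: "valid gdp" by (subst gdp_ge[OF kp0]) simp
lemma vgcp_p[simp]: "valid gcp" by (subst gcp_gt[OF kp]) simp

lemma ZZ1p: "chn [U] [([U],gdp,[]),([],gcp,[U])] = chn [U] []"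
proof -
  obtain k0 where k0: "nat k = Suc k0" using kpos by (metis gr0_implies_Suc)
  have e0: "ge (nat k - 1) = ge k0" using k0 by simp
  have vk0[simp]: "valid (ge k0)" using k0 by simp
  have k0l: "k0 < nat k" using k0 by simp
  have gdp0: "gdp = chn [D,U] [([],gd,[]),([],gX (Suc k0),[D]),([],gtau,[])]" using gdp_ge[OF kp0] k0 by simp
  have P3': "chn [U] [([],gs,[D]),([U],ge k0,[])] = chn [U] [([U],gtau,[]),([],ge k0,[U])]"
    using P3p e0 by simp
  let ?W1 = "chn [U] [([U],gd,[]),([U],gX (Suc k0),[D]),([],gs,[D]),([U],ge k0,[])]"
  have A: "chn [U] [([U],gdp,[]),([],gcp,[U])] = sm (-1) (chn [U] [([U],gdp,[]),([],ge k0,[U])])"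
    apply (rule sm_at[where i=1])
    using gcp_gt[OF kp] e0 by simp_all
  have B: "chn [U] [([U],gdp,[]),([],ge k0,[U])] = ?W1"
    apply (rule exp_at'[OF gdp0, where i=0], simp_all)
    apply (rule rep_at'[OF P3'[symmetric], where i=2], simp_all)
    done
  let ?V = "chn [U] [([U],gd,[]),([U],gX k0,[D]),([],gs,[D]),([],gx,[U,D]),([U],ge k0,[])]"
  have C1: "?V = chn [U] [] \<oplus> ?W1"
    apply (rule rep_pl'[OF SD, where i=2], simp_all)
    apply (rule arg_cong2[where f="(\<oplus>)"])
    apply (rule rep_at'[OF KP5[OF kp0 k0l], where i=0], simp_all)
    apply (rule col_at[OF gXc', where i=1], simp_all)
    done
  have C2: "?V = Z [U] [U]"
    apply (rule MS2i'[where i=1 and n=k0], simp_all)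
    subgoal
      apply (intro allI impI)
      subgoal for a b
        apply (rule exp_at'[OF gXX, where i=1], simp_all)
        apply (rule swL_ok[where i=1], simp_all add: ev)
        apply (rule swL_ok[where i=3], simp_all add: ev)
        apply (rule swL_ok[where i=2], simp_all add: ev)
        apply (rule rep_Z'[OF KP5'[OF kp0, of b k0], where i=0])
        using k0 by simp_all
      done
    apply (rule col_at[OF gXc', where i=2], simp_all)
    apply (rule rep_at'[OF T2[symmetric], where i=0], simp_all)
    apply (rule swL_ok[where i=2], simp_all add: ev)
    apply (rule rep_Z'[OF KP3[OF kp0 k0l], where i=1])
    by simp_all
  have "sm (-1) ?W1 = chn [U] []"
    by (rule neg_lem) (use C1 C2 in simp_all)
  thus ?thesis using A B by simp
qed

lemma ZZ2p: "chn [D] [([],gdp,[D]),([D],gcp,[])] = chn [D] []"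
proof -
  obtain k0 where k0: "nat k = Suc k0" using kpos by (metis gr0_implies_Suc)
  have e0: "ge (nat k - 1) = ge k0" using k0 by simp
  have vk0[simp]: "valid (ge k0)" using k0 by simp
  have k0l: "k0 < nat k" using k0 by simp
  have gdp0: "gdp = chn [D,U] [([],gd,[]),([],gX (Suc k0),[D]),([],gtau,[])]" using gdp_ge[OF kp0] k0 by simp
  have P4': "chn [D] [([U],gsp,[]),([],ge k0,[D])] = chn [D] [([],gtau,[D]),([D],ge k0,[])]"
    using P4p e0 by simp
  have TE0: "chn [] [([],gt,[]),([],gX k0,[D]),([],ge k0,[])] = Z [] [D,U]"
    using TE[OF k0l] e0 by simp
  let ?W2 = "chn [D] [([D],gd,[]),([],gt,[D]),([],gX (Suc k0),[D,D]),([],ge k0,[D])]"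
  have A: "chn [D] [([],gdp,[D]),([D],gcp,[])] = sm (-1) (chn [D] [([],gdp,[D]),([D],ge k0,[])])"
    apply (rule sm_at[where i=1])
    using gcp_gt[OF kp] e0 by simp_all
  have B: "chn [D] [([],gdp,[D]),([D],ge k0,[])] = ?W2"
    apply (rule exp_at'[OF gdp0, where i=0], simp_all)
    apply (rule rep_at'[OF P4'[symmetric], where i=2], simp_all)
    apply (rule swL_ok[where i=1], simp_all add: ev)
    apply (rule rep_at'[OF T2', where i=0], simp_all)
    done
  let ?V = "chn [D] [([D],gd,[]),([D],gx,[D]),([],gt,[D]),([],gX k0,[D,D]),([],ge k0,[D])]"
  have C1: "?V = chn [D] [] \<oplus> ?W2"
    apply (rule rep_pl'[OF DT, where i=1], simp_all)
    apply (rule arg_cong2[where f="(\<oplus>)"])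
    apply (rule rep_at'[OF KP5[OF kp0 k0l], where i=2], simp_all)
    apply (rule rep_at'[OF R_zag, where i=0], simp_all)
    apply (rule col_at[OF gXc, where i=2], simp_all)
    done
  have C2: "?V = Z [D] [D]"
    apply (rule rep_Z'[OF TE0, where i=2])
    by simp_all
  have "sm (-1) ?W2 = chn [D] []"
    by (rule neg_lem) (use C1 C2 in simp_all)
  thus ?thesis using A B by simp
qed

lemma P3c: "chn [U] [([],gs,[D]),([U],gcp,[])] = chn [U] [([U],gtau,[]),([],gcp,[U])]"
proof -
  have g: "gcp = sm (-1) (ge (nat k - 1))" by (rule gcp_gt[OF kp])
  show ?thesis unfolding g
    apply (rule sm_at[where i=1], simp_all, simp)
    apply (rule sym)
    apply (rule sm_at[where i=1], simp_all, simp)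
    using P3p by simp
qed

lemma P4c: "chn [D] [([U],gsp,[]),([],gcp,[D])] = chn [D] [([],gtau,[D]),([D],gcp,[])]"
proof -
  have g: "gcp = sm (-1) (ge (nat k - 1))" by (rule gcp_gt[OF kp])
  show ?thesis unfolding g
    apply (rule sm_at[where i=1], simp_all, simp)
    apply (rule sym)
    apply (rule sm_at[where i=1], simp_all, simp)
    using P4p by simp
qed

lemma P1c: "chn [D,U,U] [([],gdp,[U]),([D],gs,[])] = chn [D,U,U] [([U],gdp,[]),([],gtau,[U])]"
  using M31[of gdp gcp] ZZ1p ZZ2p P3c by simp
lemma P2c: "chn [D,D,U] [([D],gdp,[]),([],gsp,[U])] = chn [D,D,U] [([],gdp,[D]),([D],gtau,[])]"
  using M42[of gdp gcp] ZZ1p ZZ2p P4c by simp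

end

context assumes kn: "k < 0"
begin

lemma vgf[simp]: "r < nat (-k) \<Longrightarrow> valid (gf r)" using KN_f kn by simp
lemma lpos[simp]: "0 < nat (-k)" using kn by simp
lemma vgfl[simp]: "valid (gf (nat (-k) - Suc 0))" using kn by simp

lemma FT: assumes "a < nat (-k)"
  shows "chn [U,D] [([],gf (nat (-k) - 1),[]),([D],gX a,[]),([],gt,[])] = Z [U,D] []"
  apply (rule MTi[where i=1 and n=a], simp_all)
  subgoal
    apply (intro allI impI)
    subgoal for p q
      apply (rule exp_at'[OF gcrdr, where i=1], simp_all)
      apply (rule rep_Z'[OF KN5'[OF kn, of "nat (-k) - 1" p], where i=0])
      using assms by simp_all
    done
  apply (rule rep_Z'[OF KN4[OF kn], where i=0])
  using kn by simp_all

lemma P1n: "chn [D,U,U] [([],gf (nat (-k) - 1),[U]),([D],gs,[])] = chn [D,U,U] [([U],gf (nat (-k) - 1),[]),([],gtau,[U])]"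
  apply (rule DLs[where X="[]" and Y="[U]"])
  apply (simp_all add: kn)
  subgoal
    apply (rule sym)
    apply (rule rep_at'[OF KN1[OF kn], where i=1], simp_all)
    apply (rule sym)
    apply (rule DLs[where X="[U]" and Y="[]"])
    apply (simp_all add: kn)
    subgoal
      apply (rule rep_at'[OF T1, where i=1], simp_all)
      apply (rule rep_Z'[OF KN4[OF kn], where i=0], simp_all add: kn)
      apply (rule sym)
      apply (rule rep_Z'[OF KN4[OF kn], where i=0], simp_all add: kn)
      done
    subgoal
      apply (intro allI impI)
      subgoal for j
        apply (rule swL_ok[where i=2], simp_all add: ev)
        apply (rule rep_at'[OF T3, where i=3], simp_all)
        apply (rule MS1i'[where i=1 and n=j], simp_all)
        subgoal
          apply (intro allI impI)
          subgoal for a b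
            apply (rule exp_at'[OF gXX, where i=1], simp_all)
            apply (rule rep_at'[OF T3[symmetric], where i=3], simp_all)
            apply (rule swR_ok[where i=2], simp_all add: ev)
            apply (rule rep_Z'[OF FT[of a], where i=0], simp_all)
            done
          done
        apply (rule rep_at'[OF R_ss, where i=2], simp_all)
        apply (cases "j = nat (-k) - 1")
        subgoal
          apply (rule rep_at'[OF KN5[OF kn, of j], where i=0])
          apply simp_all
          apply (rule sym)
          apply (rule rep_at'[OF KN5[OF kn, of j], where i=0])
          by simp_all
        subgoal
          apply (rule rep_Z'[OF KN5'[OF kn, of "nat (-k) - 1" j], where i=0])
          apply simp_all
          apply (rule sym)
          apply (rule rep_Z'[OF KN5'[OF kn, of "nat (-k) - 1" j], where i=0])
          by simp_all
        done
      done
    done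
  subgoal
    apply (intro allI impI)
    subgoal for r
      apply (rule MS2i[where i=1 and n=r], simp_all)
      subgoal
        apply (intro allI impI)
        subgoal for a b
          apply (rule exp_at'[OF gXX, where i=1], simp_all)
          apply (rule swR_ok[where i=2], simp_all add: ev)
          apply (rule rep_Z'[OF KN5'[OF kn, of "nat (-k) - 1" a], where i=0])
          by simp_all
        done
      apply (rule rep_at'[OF T3[symmetric], where i=2], simp_all)
      apply (rule swR_ok[where i=1], simp_all add: ev)
      apply (rule rep_Z'[OF KN4[OF kn], where i=0], simp_all add: kn)
      apply (rule sym)
      apply (rule rep_Z'[OF KN3[OF kn], where i=1], simp_all)
      done
    done
  done


lemma P2n: "chn [D,D,U] [([D],gf (nat (-k) - 1),[]),([],gsp,[U])] = chn [D,D,U] [([],gf (nat (-k) - 1),[D]),([D],gtau,[])]"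
  apply (rule DLs[where X="[D]" and Y="[]"])
  apply (simp_all add: kn)
  subgoal
    apply (rule sym)
    apply (rule rep_at'[OF KN1[OF kn], where i=1], simp_all)
    apply (rule sym)
    apply (rule DLs[where X="[]" and Y="[D]"])
    apply (simp_all add: kn)
    subgoal
      apply (rule rep_at'[OF T1', where i=1], simp_all)
      apply (rule rep_Z'[OF KN4[OF kn], where i=0], simp_all add: kn)
      apply (rule sym)
      apply (rule rep_Z'[OF KN4[OF kn], where i=0], simp_all add: kn)
      done
    subgoal
      apply (intro allI impI)
      subgoal for j
        apply (rule MTi'[where i=2 and n=j], simp_all)
        subgoal
          apply (intro allI impI)
          subgoal for p q
            apply (rule exp_at'[OF gcrdr, where i=2], simp_all)
            apply (rule swL_ok[where i=1], simp_all add: ev)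
            apply (rule rep_at'[OF T3'[symmetric], where i=2], simp_all)
            apply (rule rep_Z'[OF FT[of p], where i=0], simp_all)
            done
          done
        apply (rule rep_at'[OF T3', where i=3], simp_all)
        apply (rule swL_ok[where i=1], simp_all add: ev)
        apply (rule rep_at'[OF SS', where i=2], simp_all)
        apply (cases "j = nat (-k) - 1")
        subgoal
          apply (rule rep_at'[OF KN5[OF kn, of j], where i=0])
          apply simp_all
          apply (rule sym)
          apply (rule rep_at'[OF KN5[OF kn, of j], where i=0])
          by simp_all
        subgoal
          apply (rule rep_Z'[OF KN5'[OF kn, of "nat (-k) - 1" j], where i=0])
          apply simp_all
          apply (rule sym)
          apply (rule rep_Z'[OF KN5'[OF kn, of "nat (-k) - 1" j], where i=0])
          by simp_all
        done
      done
    done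
  subgoal
    apply (intro allI impI)
    subgoal for r
      apply (rule swL_ok[where i=1], simp_all add: ev)
      apply (rule rep_at'[OF T3'[symmetric], where i=2], simp_all)
      apply (rule rep_Z'[OF FT[of r], where i=0], simp_all)
      apply (rule sym)
      apply (rule rep_Z'[OF KN3[OF kn], where i=1], simp_all)
      done
    done
  done

lemma gcp_n: "gcp = chn [] [([],gtau,[]),([D],gX (nat (-k)),[]),([],gc,[])]"
  using kn by (simp add: heis_c'_def arr ar_eq mr_simps)
lemma gdp_n: "gdp = gf (nat (-k) - 1)"
  using kn by (simp add: heis_d'_def)
lemma vgcp_n[simp]: "valid gcp" by (subst gcp_n) simp
lemma vgdp_n[simp]: "valid gdp" by (subst gdp_n) simp

lemma ZZ1n: "chn [U] [([U],gdp,[]),([],gcp,[U])] = chn [U] []"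
proof -
  obtain l0 where l0: "nat (-k) = Suc l0" using lpos by (metis gr0_implies_Suc)
  have f0: "gf (nat (-k) - 1) = gf l0" using l0 by simp
  have gc0: "gcp = chn [] [([],gtau,[]),([D],gX (Suc l0),[]),([],gc,[])]" using gcp_n l0 by simp
  have P1': "chn [D,U,U] [([],gf l0,[U]),([D],gs,[])] = chn [D,U,U] [([U],gf l0,[]),([],gtau,[U])]"
    using P1n f0 by simp
  have vl0[simp]: "valid (gf l0)" using l0 by simp
  have l0l: "l0 < nat (-k)" using l0 by simp
  show ?thesis
    unfolding gdp_n f0
    apply (rule exp_at'[OF gc0, where i=1], simp_all)
    apply (rule rep_at'[OF P1'[symmetric], where i=0], simp_all)
    apply (rule exp_at'[OF gXc, where i=2], simp_all)
    apply (rule rep_pl'[OF SD, where i=1], simp_all)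
    apply (rule plZ_I[where p="[U]" and q="[U]"])
    subgoal
      apply (rule rep_at'[OF KN5[OF kn l0l], where i=0])
      by simp_all
    subgoal
      apply (rule MS2i[where i=2 and n=l0], simp_all)
      subgoal
        apply (intro allI impI)
        subgoal for a b
          apply (rule exp_at'[OF gXX, where i=2], simp_all)
          apply (rule swR_ok[where i=3], simp_all add: ev)
          apply (rule swR_ok[where i=1], simp_all add: ev)
          apply (rule swR_ok[where i=2], simp_all add: ev)
          apply (rule rep_Z'[OF KN5'[OF kn l0l, of a], where i=0])
          using l0 by simp_all
        done
      apply (rule rep_at'[OF T3[symmetric], where i=3], simp_all)
      apply (rule swR_ok[where i=2], simp_all add: ev)
      apply (rule swR_ok[where i=1], simp_all add: ev)
      apply (rule rep_Z'[OF KN4[OF kn l0l], where i=0])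
      by simp_all
    by simp_all
qed

lemma ZZ2n: "chn [D] [([],gdp,[D]),([D],gcp,[])] = chn [D] []"
proof -
  obtain l0 where l0: "nat (-k) = Suc l0" using lpos by (metis gr0_implies_Suc)
  have f0: "gf (nat (-k) - 1) = gf l0" using l0 by simp
  have gc0: "gcp = chn [] [([],gtau,[]),([D],gX (Suc l0),[]),([],gc,[])]" using gcp_n l0 by simp
  have P2': "chn [D,D,U] [([D],gf l0,[]),([],gsp,[U])] = chn [D,D,U] [([],gf l0,[D]),([D],gtau,[])]"
    using P2n f0 by simp
  have vl0[simp]: "valid (gf l0)" using l0 by simp
  have l0l: "l0 < nat (-k)" using l0 by simp
  have FT0: "chn [U,D] [([],gf l0,[]),([D],gX l0,[]),([],gt,[])] = Z [U,D] []" using FT[OF l0l] f0 by simp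
  show ?thesis
    unfolding gdp_n f0
    apply (rule exp_at'[OF gc0, where i=1], simp_all)
    apply (rule rep_at'[OF P2'[symmetric], where i=0], simp_all)
    apply (rule swL_ok[where i=1], simp_all add: ev)
    apply (rule rep_at'[OF T3'[symmetric], where i=2], simp_all)
    apply (rule exp_at'[OF gXc', where i=1], simp_all)
    apply (rule rep_pl'[OF DT, where i=2], simp_all)
    apply (rule plZ_I[where p="[D]" and q="[D]"])
    subgoal
      apply (rule rep_at'[OF KN5[OF kn l0l], where i=0], simp_all)
      apply (rule rep_at'[OF R_zag, where i=0])
      by simp_all
    subgoal
      apply (rule rep_Z'[OF FT0, where i=0])
      by simp_all
    by simp_all
qed


lemma P3n: "chn [U] [([],gs,[D]),([U],gcp,[])] = chn [U] [([U],gtau,[]),([],gcp,[U])]"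
  using M13[of gdp gcp] ZZ1n ZZ2n P1n gdp_n by simp
lemma P4n: "chn [D] [([U],gsp,[]),([],gcp,[D])] = chn [D] [([],gtau,[D]),([D],gcp,[])]"
  using M24[of gdp gcp] ZZ1n ZZ2n P2n gdp_n by simp
lemma P1n': "chn [D,U,U] [([],gdp,[U]),([D],gs,[])] = chn [D,U,U] [([U],gdp,[]),([],gtau,[U])]"
  using P1n gdp_n by simp
lemma P2n': "chn [D,D,U] [([D],gdp,[]),([],gsp,[U])] = chn [D,D,U] [([],gdp,[D]),([D],gtau,[])]"
  using P2n gdp_n by simp

end

context assumes kz: "k = 0"
begin

lemma kz0: "0 \<le> k" using kz by simp
lemma kzl: "k \<le> 0" using kz by simp
lemma gdp0: "gdp = chn [D,U] [([],gd,[]),([],gtau,[])]"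
  using gdp_ge[OF kz0] kz by (simp add: arr gX0)
lemma gcp0: "gcp = chn [] [([],gtau,[]),([],gc,[])]"
  using gcp_le kz by (simp add: arr gX0)
lemma vgdp_0[simp]: "valid gdp" by (subst gdp0) simp
lemma vgcp_0[simp]: "valid gcp" by (subst gcp0) simp

lemma P1z: "chn [D,U,U] [([],gdp,[U]),([D],gs,[])] = chn [D,U,U] [([U],gdp,[]),([],gtau,[U])]"
  apply (rule INJpre[OF kz0, where X="[]" and Y="[U]"], simp_all)
  apply (rule INJpre[OF kz0, where X="[U]" and Y="[]"], simp_all)
  apply (rule rep_at'[OF T1, where i=1], simp_all)
  apply (rule exp_at'[OF gdp0, where i=0], simp_all)
  apply (rule rep_at'[OF K0a[OF kzl], where i=1], simp_all)
  apply (rule rep_at'[OF T2, where i=0], simp_all)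
  apply (rule rep_at'[OF R_ss, where i=1], simp_all)
  apply (rule sym)
  apply (rule rep_at'[OF K0a[OF kzl], where i=1], simp_all)
  apply (rule exp_at'[OF gdp0, where i=0], simp_all)
  apply (rule rep_at'[OF K0a[OF kzl], where i=1], simp_all)
  done

lemma P3z: "chn [U] [([],gs,[D]),([U],gcp,[])] = chn [U] [([U],gtau,[]),([],gcp,[U])]"
  apply (rule INJpost[OF kzl, where X="[U]" and Y="[]"], simp_all)
  apply (rule INJpost[OF kzl, where X="[]" and Y="[U]"], simp_all)
  apply (rule rep_at'[OF T1[symmetric], where i=0], simp_all)
  apply (rule exp_at'[OF gcp0, where i=3], simp_all)
  apply (rule rep_at'[OF KP1[OF kz0], where i=2], simp_all)
  apply (rule rep_at'[OF T3, where i=1], simp_all)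
  apply (rule rep_at'[OF R_ss, where i=0], simp_all)
  apply (rule sym)
  apply (rule rep_at'[OF KP1[OF kz0], where i=1], simp_all)
  apply (rule exp_at'[OF gcp0, where i=1], simp_all)
  apply (rule rep_at'[OF KP1[OF kz0], where i=0], simp_all)
  done

lemma P2z: "chn [D,D,U] [([D],gdp,[]),([],gsp,[U])] = chn [D,D,U] [([],gdp,[D]),([D],gtau,[])]"
  apply (rule INJpre[OF kz0, where X="[D]" and Y="[]"], simp_all)
  apply (rule INJpre[OF kz0, where X="[]" and Y="[D]"], simp_all)
  apply (rule rep_at'[OF T1', where i=1], simp_all)
  apply (rule exp_at'[OF gdp0, where i=0], simp_all)
  apply (rule rep_at'[OF K0a[OF kzl], where i=1], simp_all)
  apply (rule rep_at'[OF T2'[symmetric], where i=0], simp_all)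
  apply (rule rep_at'[OF SS', where i=1], simp_all)
  apply (rule sym)
  apply (rule rep_at'[OF K0a[OF kzl], where i=1], simp_all)
  apply (rule exp_at'[OF gdp0, where i=0], simp_all)
  apply (rule rep_at'[OF K0a[OF kzl], where i=1], simp_all)
  done

lemma P4z: "chn [D] [([U],gsp,[]),([],gcp,[D])] = chn [D] [([],gtau,[D]),([D],gcp,[])]"
  apply (rule INJpost[OF kzl, where X="[]" and Y="[D]"], simp_all)
  apply (rule INJpost[OF kzl, where X="[D]" and Y="[]"], simp_all)
  apply (rule rep_at'[OF T1'[symmetric], where i=0], simp_all)
  apply (rule exp_at'[OF gcp0, where i=3], simp_all)
  apply (rule rep_at'[OF KP1[OF kz0], where i=2], simp_all)
  apply (rule rep_at'[OF T3', where i=1], simp_all)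
  apply (rule rep_at'[OF SS', where i=0], simp_all)
  apply (rule sym)
  apply (rule rep_at'[OF KP1[OF kz0], where i=1], simp_all)
  apply (rule exp_at'[OF gcp0, where i=1], simp_all)
  apply (rule rep_at'[OF KP1[OF kz0], where i=0], simp_all)
  done

end

lemma allP: "valid gdp \<and> valid gcp \<and>
  chn [D,U,U] [([],gdp,[U]),([D],gs,[])] = chn [D,U,U] [([U],gdp,[]),([],gtau,[U])] \<and>
  chn [D,D,U] [([D],gdp,[]),([],gsp,[U])] = chn [D,D,U] [([],gdp,[D]),([D],gtau,[])] \<and>
  chn [U] [([],gs,[D]),([U],gcp,[])] = chn [U] [([U],gtau,[]),([],gcp,[U])] \<and>
  chn [D] [([U],gsp,[]),([],gcp,[D])] = chn [D] [([],gtau,[D]),([D],gcp,[])]"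
proof (cases "k < 0")
  case True thus ?thesis using P1n' P2n' P3n P4n vgdp_n vgcp_n by simp
next
  case False
  show ?thesis
  proof (cases "k = 0")
    case True thus ?thesis using P1z P2z P3z P4z vgdp_0 vgcp_0 by simp
  next
    case False
    hence "0 < k" using \<open>\<not> k < 0\<close> by simp
    thus ?thesis using P1c P2c P3c P4c vgdp_p vgcp_p by simp
  qed
qed

lemma main: "cmp C (tns C (heis_d' C k x d tau f) (idm C UP)) (tns C (idm C DN) s) =
           cmp C (tns C (idm C UP) (heis_d' C k x d tau f)) (tns C tau (idm C UP)) \<and>
         cmp C (tns C (idm C DN) (heis_d' C k x d tau f)) (tns C (heis_s' C s c d) (idm C UP)) =
           cmp C (tns C (heis_d' C k x d tau f) (idm C DN)) (tns C (idm C DN) tau) \<and>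
         cmp C (tns C s (idm C DN)) (tns C (idm C UP) (heis_c' C k x c tau e)) =
           cmp C (tns C (idm C UP) tau) (tns C (heis_c' C k x c tau e) (idm C UP)) \<and>
         cmp C (tns C (idm C UP) (heis_s' C s c d)) (tns C (heis_c' C k x c tau e) (idm C DN)) =
           cmp C (tns C tau (idm C DN)) (tns C (idm C DN) (heis_c' C k x c tau e))"
proof -
  have A: "valid gdp" "valid gcp" using allP by simp_all
  have h1: "chn [D,U,U] [([],gdp,[U]),([D],gs,[])] = chn [D,U,U] [([U],gdp,[]),([],gtau,[U])]" using allP by simp
  have h2: "chn [D,D,U] [([D],gdp,[]),([],gsp,[U])] = chn [D,D,U] [([],gdp,[D]),([D],gtau,[])]" using allP by simp
  have h3: "chn [U] [([],gs,[D]),([U],gcp,[])] = chn [U] [([U],gtau,[]),([],gcp,[U])]" using allP by simp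
  have h4: "chn [D] [([U],gsp,[]),([],gcp,[D])] = chn [D] [([],gtau,[D]),([D],gcp,[])]" using allP by simp
  have r1: "mr (chn [D,U,U] [([],gdp,[U]),([D],gs,[])]) = mr (chn [D,U,U] [([U],gdp,[]),([],gtau,[U])])" using h1 by simp
  have r2: "mr (chn [D,D,U] [([D],gdp,[]),([],gsp,[U])]) = mr (chn [D,D,U] [([],gdp,[D]),([D],gtau,[])])" using h2 by simp
  have r3: "mr (chn [U] [([],gs,[D]),([U],gcp,[])]) = mr (chn [U] [([U],gtau,[]),([],gcp,[U])])" using h3 by simp
  have r4: "mr (chn [D] [([U],gsp,[]),([],gcp,[D])]) = mr (chn [D] [([],gtau,[D]),([D],gcp,[])])" using h4 by simp
  show ?thesis using r1 r2 r3 r4 A by (simp add: arr mr_simps)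
qed

end

theorem lemma2p6:
  fixes C :: "('k::comm_ring_1, 'm) lmc" and k :: int
    and x s c d tau :: 'm and e f :: "nat \<Rightarrow> 'm"
  assumes "slmc C"
    and "heis_rels C k x s c d tau e f"
  shows "cmp C (tns C (heis_d' C k x d tau f) (idm C UP)) (tns C (idm C DN) s) =
           cmp C (tns C (idm C UP) (heis_d' C k x d tau f)) (tns C tau (idm C UP)) \<and>
         cmp C (tns C (idm C DN) (heis_d' C k x d tau f)) (tns C (heis_s' C s c d) (idm C UP)) =
           cmp C (tns C (heis_d' C k x d tau f) (idm C DN)) (tns C (idm C DN) tau) \<and>
         cmp C (tns C s (idm C DN)) (tns C (idm C UP) (heis_c' C k x c tau e)) =
           cmp C (tns C (idm C UP) tau) (tns C (heis_c' C k x c tau e) (idm C UP)) \<and>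
         cmp C (tns C (idm C UP) (heis_s' C s c d)) (tns C (heis_c' C k x c tau e) (idm C DN)) =
           cmp C (tns C tau (idm C DN)) (tns C (idm C DN) (heis_c' C k x c tau e))"
proof -
  interpret HC C k x s c d tau e f
    using assms by (simp add: HC_def LC_def HC_axioms_def)
  show ?thesis by (rule main)
qed

end
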